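(* For all closed terms $t_0,t_1$ of $\lambda_S$, if $t_0\approx^p_{\emptyset}t_1$ then $t_0\equiv_p t_1$.
   Context: Terms of $\lambda_S$: $t ::= x \mid \lambda x.t \mid t\,t \mid \mathcal{S}k.t \mid \langle t\rangle$ (shift binds $k$; $\langle\cdot\rangle$ is reset), up to $\alpha$-conversion. Values $v::=\lambda x.t$. Pure contexts $E ::= \Box \mid v\,E \mid E\,t$; evaluation contexts $F ::= \Box \mid v\,F \mid F\,t \mid \langle F\rangle$; contexts $C ::= \Box \mid \lambda x.C \mid t\,C \mid C\,t \mid \mathcal{S}k.C \mid \langle C\rangle$. Reduction: $F[(\lambda x.t)v]\to F[t\{v/x\}]$; $F[\langle E[\mathcal Sk.t]\rangle]\to F[\langle t\{\lambda x.\langle E[x]\rangle/k\}\rangle]$ ($x\notin\mathrm{fv}(E)$); $F[\langle v\rangle]\to F[v]$; $\to^*$ reflexive-transitive closure; $t\Downarrow t'$ iff $t\to^*t'$ and $t'$ irreducible. A program is a term of the form $\langle t\rangle$ (ranged over by $p$). Closures: for $R$ a relation on closed terms, $\widetilde R$ is the smallest relation containing $R$, all $(x,x)$, closed under all term constructors, restricted to closed terms; $\widehat R$ is the smallest relation on closed evaluation contexts with $\Box\widehat R\Box$, $v_0F_0\widehat Rv_1F_1$ if $F_0\widehat RF_1,v_0\widetilde Rv_1$; $F_0t_0\widehat RF_1t_1$ if $F_0\widehat RF_1,t_0\widetilde Rt_1$; $\langle F_0\rangle\widehat R\langle F_1\rangle$ if $F_0\widehat RF_1$. Environmental bisimilarity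 for programs: here an environment $\mathcal E$ is a relation on closed values; an environmental relation $\mathcal X$ is a set of environments and triples $(\mathcal E,t_0,t_1)$ with $t_0,t_1$ closed, written $t_0\mathcal X_{\mathcal E}t_1$. $\mathcal X$ is an environmental bisimulation for programs if (1) if $t_0\mathcal X_{\mathcal E}t_1$ and $t_0,t_1$ are not both programs, then for all pure contexts $E_0\widehat{\mathcal E}E_1$, $\langle E_0[t_0]\rangle\mathcal X_{\mathcal E}\langle E_1[t_1]\rangle$; (2) if $p_0\mathcal X_{\mathcal E}p_1$ (programs): (a) if $p_0\to p_0'$ with $p_0'$ a program, then $p_1\to^*p_1'$ with $p_1'$ a program and $p_0'\mathcal X_{\mathcal E}p_1'$; (b) if $p_0\to v_0$ then $p_1\to^*v_1$, a value, and $\{(v_0,v_1)\}\cup\mathcal E\in\mathcal X$; (c) symmetric conditions for $p_1$; (3) for all $\mathcal E\in\mathcal X$, if $(\lambda x.t_0)\mathcal E(\lambda x.t_1)$ and $v_0\widetilde{\mathcal E}v_1$ then $t_0\{v_0/x\}\mathcal X_{\mathcal E}t_1\{v_1/x\}$. $\approx^p$ is the largest such relation, $t_0\approx^p_{\mathcal E}t_1$ meaning $(\mathcal E,t_0,t_1)\in\approx^p$. Contextual equivalence for programs: $t_0\equiv_pt_1$ iff for every context $C$ with $\langle C[t_0]\rangle,\langle C[t_1]\rangle$ closed, $\langle C[t_0]\rangle\Downarrow$ a value iff $\langle C[t_1]\rangle\Downarrow$ a value. *)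

theory Defs
  imports Main
begin

section \<open>Syntax of lambda_S (de Bruijn indices, so alpha-equivalence is syntactic equality)\<close>

text \<open>Lam t binds index 0 in t; Shift t (i.e. S k. t) binds k as index 0 in t; Reset t is the delimiter.\<close>
datatype trm = Var nat | Lam trm | App trm trm | Shift trm | Reset trm

fun lift :: "nat \<Rightarrow> trm \<Rightarrow> trm" where
  "lift k (Var i) = (if i < k then Var i else Var (Suc i))"
| "lift k (Lam t) = Lam (lift (Suc k) t)"
| "lift k (App t u) = App (lift k t) (lift k u)"
| "lift k (Shift t) = Shift (lift (Suc k) t)"
| "lift k (Reset t) = Reset (lift k t)"

fun subst :: "nat \<Rightarrow> trm \<Rightarrow> trm \<Rightarrow> trm" where
  "subst k s (Var i) = (if i < k then Var i else if i = k then s else Var (i - 1))"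
| "subst k s (Lam t) = Lam (subst (Suc k) (lift 0 s) t)"
| "subst k s (App t u) = App (subst k s t) (subst k s u)"
| "subst k s (Shift t) = Shift (subst (Suc k) (lift 0 s) t)"
| "subst k s (Reset t) = Reset (subst k s t)"

fun closed_at :: "nat \<Rightarrow> trm \<Rightarrow> bool" where
  "closed_at n (Var i) = (i < n)"
| "closed_at n (Lam t) = closed_at (Suc n) t"
| "closed_at n (App t u) = (closed_at n t \<and> closed_at n u)"
| "closed_at n (Shift t) = closed_at (Suc n) t"
| "closed_at n (Reset t) = closed_at n t"

definition closed :: "trm \<Rightarrow> bool" where
  "closed t = closed_at 0 t"

definition is_val :: "trm \<Rightarrow> bool" where
  "is_val t = (\<exists>b. t = Lam b)"

definition is_prog :: "trm \<Rightarrow> bool" where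
  "is_prog t = (\<exists>u. t = Reset u)"

datatype ectx = EHole | EAppR trm ectx | EAppL ectx trm | EReset ectx

fun efill :: "ectx \<Rightarrow> trm \<Rightarrow> trm" where
  "efill EHole t = t"
| "efill (EAppR v F) t = App v (efill F t)"
| "efill (EAppL F u) t = App (efill F t) u"
| "efill (EReset F) t = Reset (efill F t)"

fun evctx :: "ectx \<Rightarrow> bool" where
  "evctx EHole = True"
| "evctx (EAppR v F) = (is_val v \<and> evctx F)"
| "evctx (EAppL F u) = evctx F"
| "evctx (EReset F) = evctx F"

fun pure :: "ectx \<Rightarrow> bool" where
  "pure EHole = True"
| "pure (EAppR v F) = (is_val v \<and> pure F)"
| "pure (EAppL F u) = pure F"
| "pure (EReset F) = False"

fun elift :: "nat \<Rightarrow> ectx \<Rightarrow> ectx" where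
  "elift k EHole = EHole"
| "elift k (EAppR v F) = EAppR (lift k v) (elift k F)"
| "elift k (EAppL F u) = EAppL (elift k F) (lift k u)"
| "elift k (EReset F) = EReset (elift k F)"

datatype ctx = Hole | CLam ctx | CAppR trm ctx | CAppL ctx trm | CShift ctx | CReset ctx

fun cfill :: "ctx \<Rightarrow> trm \<Rightarrow> trm" where
  "cfill Hole t = t"
| "cfill (CLam C) t = Lam (cfill C t)"
| "cfill (CAppR u C) t = App u (cfill C t)"
| "cfill (CAppL C u) t = App (cfill C t) u"
| "cfill (CShift C) t = Shift (cfill C t)"
| "cfill (CReset C) t = Reset (cfill C t)"

inductive step :: "trm \<Rightarrow> trm \<Rightarrow> bool" where
  beta: "evctx F \<Longrightarrow> is_val v \<Longrightarrow>
     step (efill F (App (Lam t) v)) (efill F (subst 0 v t))"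
| shift: "evctx F \<Longrightarrow> pure E \<Longrightarrow>
     step (efill F (Reset (efill E (Shift t))))
          (efill F (Reset (subst 0 (Lam (Reset (efill (elift 0 E) (Var 0)))) t)))"
| reset: "evctx F \<Longrightarrow> is_val v \<Longrightarrow>
     step (efill F (Reset v)) (efill F v)"

abbreviation steps :: "trm \<Rightarrow> trm \<Rightarrow> bool" where
  "steps \<equiv> step\<^sup>*\<^sup>*"

definition irreducible :: "trm \<Rightarrow> bool" where
  "irreducible t = (\<not> (\<exists>u. step t u))"

definition eval_to_val :: "trm \<Rightarrow> bool" where
  "eval_to_val t = (\<exists>t'. steps t t' \<and> irreducible t' \<and> is_val t')"

inductive_set tilde_raw :: "(trm \<times> trm) set \<Rightarrow> (trm \<times> trm) set" for R where
  base: "p \<in> R \<Longrightarrow> p \<in> tilde_raw R"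
| var: "(Var i, Var i) \<in> tilde_raw R"
| lam: "(a, b) \<in> tilde_raw R \<Longrightarrow> (Lam a, Lam b) \<in> tilde_raw R"
| app: "(a, b) \<in> tilde_raw R \<Longrightarrow> (c, d) \<in> tilde_raw R \<Longrightarrow> (App a c, App b d) \<in> tilde_raw R"
| shft: "(a, b) \<in> tilde_raw R \<Longrightarrow> (Shift a, Shift b) \<in> tilde_raw R"
| rst: "(a, b) \<in> tilde_raw R \<Longrightarrow> (Reset a, Reset b) \<in> tilde_raw R"

definition tilde :: "(trm \<times> trm) set \<Rightarrow> (trm \<times> trm) set" where
  "tilde R = {(a, b). (a, b) \<in> tilde_raw R \<and> closed a \<and> closed b}"

inductive_set hat :: "(trm \<times> trm) set \<Rightarrow> (ectx \<times> ectx) set" for R where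
  hole: "(EHole, EHole) \<in> hat R"
| appR: "(F0, F1) \<in> hat R \<Longrightarrow> is_val v0 \<Longrightarrow> is_val v1 \<Longrightarrow> (v0, v1) \<in> tilde R \<Longrightarrow>
          (EAppR v0 F0, EAppR v1 F1) \<in> hat R"
| appL: "(F0, F1) \<in> hat R \<Longrightarrow> (t0, t1) \<in> tilde R \<Longrightarrow>
          (EAppL F0 t0, EAppL F1 t1) \<in> hat R"
| rst: "(F0, F1) \<in> hat R \<Longrightarrow> (EReset F0, EReset F1) \<in> hat R"

type_synonym env = "(trm \<times> trm) set"
type_synonym envrel = "env set \<times> (env \<times> trm \<times> trm) set"

definition env_ok :: "env \<Rightarrow> bool" where
  "env_ok E = (\<forall>(a, b) \<in> E. closed a \<and> closed b \<and> is_val a \<and> is_val b)"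

definition envrel_ok :: "envrel \<Rightarrow> bool" where
  "envrel_ok X = ((\<forall>E \<in> fst X. env_ok E) \<and>
     (\<forall>(E, t0, t1) \<in> snd X. env_ok E \<and> closed t0 \<and> closed t1))"

definition env_bisim_p :: "envrel \<Rightarrow> bool" where
  "env_bisim_p X = (envrel_ok X \<and>
    \<comment> \<open>(1)\<close>
    (\<forall>E t0 t1. (E, t0, t1) \<in> snd X \<longrightarrow> \<not> (is_prog t0 \<and> is_prog t1) \<longrightarrow>
       (\<forall>E0 E1. pure E0 \<longrightarrow> pure E1 \<longrightarrow> (E0, E1) \<in> hat E \<longrightarrow>
          (E, Reset (efill E0 t0), Reset (efill E1 t1)) \<in> snd X)) \<and>
    \<comment> \<open>(2)\<close>
    (\<forall>E p0 p1. (E, p0, p1) \<in> snd X \<longrightarrow> is_prog p0 \<longrightarrow> is_prog p1 \<longrightarrow>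
       \<comment> \<open>(a)\<close>
       (\<forall>p0'. step p0 p0' \<longrightarrow> is_prog p0' \<longrightarrow>
          (\<exists>p1'. steps p1 p1' \<and> is_prog p1' \<and> (E, p0', p1') \<in> snd X)) \<and>
       \<comment> \<open>(b)\<close>
       (\<forall>v0. step p0 v0 \<longrightarrow> is_val v0 \<longrightarrow>
          (\<exists>v1. steps p1 v1 \<and> is_val v1 \<and> insert (v0, v1) E \<in> fst X)) \<and>
       \<comment> \<open>(c) symmetric\<close>
       (\<forall>p1'. step p1 p1' \<longrightarrow> is_prog p1' \<longrightarrow>
          (\<exists>p0'. steps p0 p0' \<and> is_prog p0' \<and> (E, p0', p1') \<in> snd X)) \<and>
       (\<forall>v1. step p1 v1 \<longrightarrow> is_val v1 \<longrightarrow>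
          (\<exists>v0. steps p0 v0 \<and> is_val v0 \<and> insert (v0, v1) E \<in> fst X))) \<and>
    \<comment> \<open>(3)\<close>
    (\<forall>E \<in> fst X. \<forall>b0 b1 v0 v1. (Lam b0, Lam b1) \<in> E \<longrightarrow>
       is_val v0 \<longrightarrow> is_val v1 \<longrightarrow> (v0, v1) \<in> tilde E \<longrightarrow>
       (E, subst 0 v0 b0, subst 0 v1 b1) \<in> snd X))"

definition env_bisimilar_p :: "env \<Rightarrow> trm \<Rightarrow> trm \<Rightarrow> bool" where
  "env_bisimilar_p E t0 t1 = (\<exists>X. env_bisim_p X \<and> (E, t0, t1) \<in> snd X)"

definition ctx_equiv_p :: "trm \<Rightarrow> trm \<Rightarrow> bool" where
  "ctx_equiv_p t0 t1 = (\<forall>C. closed (Reset (cfill C t0)) \<longrightarrow> closed (Reset (cfill C t1)) \<longrightarrow>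
     (eval_to_val (Reset (cfill C t0)) \<longleftrightarrow> eval_to_val (Reset (cfill C t1))))"

end

theory Submission
  imports Defs
begin


lemma closed_at_mono: "closed_at n t \<Longrightarrow> n \<le> m \<Longrightarrow> closed_at m t"
  by (induction t arbitrary: n m) auto

lemma lift_closed: "closed_at n t \<Longrightarrow> n \<le> k \<Longrightarrow> lift k t = t"
  by (induction t arbitrary: n k) auto

lemma subst_closed: "closed_at n t \<Longrightarrow> n \<le> k \<Longrightarrow> subst k s t = t"
  by (induction t arbitrary: n k s) auto

lemma closed_lift: "closed_at n t \<Longrightarrow> closed_at (Suc n) (lift k t)"
  by (induction t arbitrary: n k) auto

lemma closed_subst: "closed_at (Suc n) t \<Longrightarrow> closed_at n s \<Longrightarrow> k \<le> n \<Longrightarrow> closed_at n (subst k s t)"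
  by (induction t arbitrary: n k s) (auto simp: closed_lift)

fun ecl :: "nat \<Rightarrow> ectx \<Rightarrow> bool" where
  "ecl n EHole = True"
| "ecl n (EAppR v F) = (closed_at n v \<and> ecl n F)"
| "ecl n (EAppL F u) = (ecl n F \<and> closed_at n u)"
| "ecl n (EReset F) = ecl n F"

lemma closed_efill: "closed_at n (efill F t) = (ecl n F \<and> closed_at n t)"
  by (induction F) auto

lemma ecl_elift: "ecl n F \<Longrightarrow> ecl (Suc n) (elift k F)"
  by (induction F) (auto simp: closed_lift)

fun ecomp :: "ectx \<Rightarrow> ectx \<Rightarrow> ectx" where
  "ecomp EHole K = K"
| "ecomp (EAppR v F) K = EAppR v (ecomp F K)"
| "ecomp (EAppL F u) K = EAppL (ecomp F K) u"
| "ecomp (EReset F) K = EReset (ecomp F K)"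

lemma efill_ecomp: "efill (ecomp G F) x = efill G (efill F x)"
  by (induction G) auto

lemma evctx_ecomp: "evctx G \<Longrightarrow> evctx F \<Longrightarrow> evctx (ecomp G F)"
  by (induction G) auto

lemma pure_evctx: "pure E \<Longrightarrow> evctx E"
  by (induction E) auto

inductive sstep :: "trm \<Rightarrow> trm \<Rightarrow> bool" where
  sbeta: "is_val v \<Longrightarrow> sstep (App (Lam t) v) (subst 0 v t)"
| sshift: "pure E \<Longrightarrow> sstep (Reset (efill E (Shift t)))
          (Reset (subst 0 (Lam (Reset (efill (elift 0 E) (Var 0)))) t))"
| sreset: "is_val v \<Longrightarrow> sstep (Reset v) v"
| sappL: "sstep a a' \<Longrightarrow> sstep (App a b) (App a' b)"
| sappR: "is_val a \<Longrightarrow> sstep b b' \<Longrightarrow> sstep (App a b) (App a b')"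
| sreset2: "sstep a a' \<Longrightarrow> sstep (Reset a) (Reset a')"

lemma sstep_ctx: "evctx G \<Longrightarrow> sstep a b \<Longrightarrow> sstep (efill G a) (efill G b)"
  by (induction G) (auto intro: sstep.intros)

lemma step_sstep: "step a b \<Longrightarrow> sstep a b"
  by (induction rule: step.induct) (auto intro: sstep_ctx sstep.intros)

lemma step_ctx: "step a b \<Longrightarrow> evctx G \<Longrightarrow> step (efill G a) (efill G b)"
proof (induction rule: step.induct)
  case (beta F v t)
  then show ?case using step.beta[of "ecomp G F" v t] by (simp add: efill_ecomp evctx_ecomp)
next
  case (shift F E t)
  then show ?case using step.shift[of "ecomp G F" E t] by (simp add: efill_ecomp evctx_ecomp)
next
  case (reset F v)
  then show ?case using step.reset[of "ecomp G F" v] by (simp add: efill_ecomp evctx_ecomp)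
qed

lemma sstep_step: "sstep a b \<Longrightarrow> step a b"
proof (induction rule: sstep.induct)
  case (sbeta v t) then show ?case using step.beta[of EHole v t] by simp
next
  case (sshift E t) then show ?case using step.shift[of EHole E t] by simp
next
  case (sreset v) then show ?case using step.reset[of EHole v] by simp
next
  case (sappL a a' b) then show ?case using step_ctx[of a a' "EAppL EHole b"] by simp
next
  case (sappR a b b') then show ?case using step_ctx[of b b' "EAppR a EHole"] by simp
next
  case (sreset2 a a') then show ?case using step_ctx[of a a' "EReset EHole"] by simp
qed

lemma step_eq: "step = sstep"
  using step_sstep sstep_step by (intro ext) blast

inductive_cases sstep_LamE[elim!]: "sstep (Lam b) y"
inductive_cases sstep_VarE[elim!]: "sstep (Var i) y"
inductive_cases sstep_ShiftE[elim!]: "sstep (Shift b) y"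
inductive_cases sstep_ResetE: "sstep (Reset a) y"
inductive_cases sstep_AppE: "sstep (App a b) y"

lemma val_irred: "is_val v \<Longrightarrow> \<not> sstep v y"
  by (auto simp: is_val_def)

lemma sstep_closed: "sstep a b \<Longrightarrow> closed_at n a \<Longrightarrow> closed_at n b"
proof (induction arbitrary: n rule: sstep.induct)
  case (sbeta v t)
  then show ?case by (auto intro: closed_subst)
next
  case (sshift E t)
  then have "ecl n E" "closed_at (Suc n) t" by (auto simp: closed_efill)
  then have "closed_at n (Lam (Reset (efill (elift 0 E) (Var 0))))"
    by (auto simp: closed_efill ecl_elift)
  then show ?case using \<open>closed_at (Suc n) t\<close> by (auto intro: closed_subst)
qed auto

lemma prog_step: "sstep a b \<Longrightarrow> is_prog a \<Longrightarrow> is_prog b \<or> is_val b"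
  by (auto simp: is_prog_def elim: sstep_ResetE)

lemma eval_prepend: "steps a b \<Longrightarrow> eval_to_val b \<Longrightarrow> eval_to_val a"
  unfolding eval_to_val_def by (meson rtranclp_trans)

lemma steps_ctx: "steps a b \<Longrightarrow> evctx G \<Longrightarrow> steps (efill G a) (efill G b)"
  by (induction rule: rtranclp_induct) (auto intro: rtranclp.rtrancl_into_rtrancl step_ctx)

lemma val_eval: "is_val v \<Longrightarrow> eval_to_val v"
  unfolding eval_to_val_def irreducible_def step_eq using val_irred by blast



inductive relc :: "(trm \<times> trm) set \<Rightarrow> nat \<Rightarrow> trm \<Rightarrow> trm \<Rightarrow> bool" for P where
  rp: "(a, b) \<in> P \<Longrightarrow> relc P 1 a b"
| rv: "relc P 0 (Var i) (Var i)"
| rl: "relc P k a b \<Longrightarrow> relc P k (Lam a) (Lam b)"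
| ra: "relc P k a b \<Longrightarrow> relc P m c d \<Longrightarrow> relc P (k + m) (App a c) (App b d)"
| rs: "relc P k a b \<Longrightarrow> relc P k (Shift a) (Shift b)"
| rr: "relc P k a b \<Longrightarrow> relc P k (Reset a) (Reset b)"

inductive relE :: "(trm \<times> trm) set \<Rightarrow> nat \<Rightarrow> ectx \<Rightarrow> ectx \<Rightarrow> bool" for P where
  eh: "relE P 0 EHole EHole"
| eR: "relc P k v w \<Longrightarrow> is_val v \<Longrightarrow> is_val w \<Longrightarrow> relE P m F G \<Longrightarrow> relE P (k + m) (EAppR v F) (EAppR w G)"
| eL: "relE P m F G \<Longrightarrow> relc P k u w \<Longrightarrow> relE P (m + k) (EAppL F u) (EAppL G w)"
| eRs: "relE P m F G \<Longrightarrow> relE P m (EReset F) (EReset G)"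

inductive_cases relc_AppE: "relc P k (App a b) y"
inductive_cases relc_LamE: "relc P k (Lam a) y"
inductive_cases relc_ResetE: "relc P k (Reset a) y"
inductive_cases relc_ShiftE: "relc P k (Shift a) y"

lemmas relc_AppC = relc_AppE[consumes 1, case_names rp ra]
lemmas relc_LamC = relc_LamE[consumes 1, case_names rp rl]
lemmas relc_ResetC = relc_ResetE[consumes 1, case_names rp rr]
lemmas relc_ShiftC = relc_ShiftE[consumes 1, case_names rp rs]

definition pc :: "(trm \<times> trm) set \<Rightarrow> bool" where
  "pc P = (\<forall>(a, b) \<in> P. closed a \<and> closed b)"

definition pv :: "(trm \<times> trm) set \<Rightarrow> bool" where
  "pv P = (\<forall>(a, b) \<in> P. closed a \<and> closed b \<and> is_val a \<and> is_val b)"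

lemma pv_pc: "pv P \<Longrightarrow> pc P"
  by (auto simp: pv_def pc_def)

lemma relc_refl: "relc P 0 a a"
proof (induction a)
  case (App a1 a2) then show ?case using ra[of P 0 a1 a1 0 a2 a2] by simp
qed (auto intro: relc.intros)

lemma rp1: "(a, b) \<in> P \<Longrightarrow> relc P (Suc 0) a b"
  using rp by simp

lemma relc_lift: "relc P k a b \<Longrightarrow> pc P \<Longrightarrow> relc P k (lift i a) (lift i b)"
proof (induction arbitrary: i rule: relc.induct)
  case (rp a b)
  then have "closed_at 0 a" "closed_at 0 b" by (auto simp: pc_def closed_def)
  then show ?case using rp lift_closed[of 0 a i] lift_closed[of 0 b i] by (auto intro: rp1)
qed (auto intro: relc.intros)

lemma relc_subst: "relc P k a b \<Longrightarrow> pc P \<Longrightarrow> relc P m c d \<Longrightarrow> \<exists>j. relc P j (subst i c a) (subst i d b)"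
proof (induction arbitrary: i c d m rule: relc.induct)
  case (rp a b)
  then have "closed_at 0 a" "closed_at 0 b" by (auto simp: pc_def closed_def)
  then show ?case using rp subst_closed[of 0 a i] subst_closed[of 0 b i] by (auto intro: rp1)
next
  case (rv i')
  then show ?case by (auto intro: relc.intros)
next
  case (rl k a b)
  then have "relc P m (lift 0 c) (lift 0 d)" using relc_lift by blast
  with rl obtain j where "relc P j (subst (Suc i) (lift 0 c) a) (subst (Suc i) (lift 0 d) b)" by blast
  then show ?case by (auto intro: relc.rl)
next
  case (ra k a b m' c' d')
  then obtain j1 j2 where "relc P j1 (subst i c a) (subst i d b)" "relc P j2 (subst i c c') (subst i d d')" by blast
  then show ?case by (auto intro: relc.ra)
next
  case (rs k a b)
  then have "relc P m (lift 0 c) (lift 0 d)" using relc_lift by blast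
  with rs obtain j where "relc P j (subst (Suc i) (lift 0 c) a) (subst (Suc i) (lift 0 d) b)" by blast
  then show ?case by (auto intro: relc.rs)
next
  case (rr k a b)
  then obtain j where "relc P j (subst i c a) (subst i d b)" by blast
  then show ?case by (auto intro: relc.rr)
qed

lemma relE_efill: "relE P k F G \<Longrightarrow> relc P m a b \<Longrightarrow> relc P (k + m) (efill F a) (efill G b)"
proof (induction arbitrary: m a b rule: relE.induct)
  case (eR k v w m' F G)
  then show ?case using relc.ra[of P k v w "m' + m"] by (simp add: add.assoc)
next
  case (eL m' F G k u w)
  then have "relc P (m' + m) (efill F a) (efill G b)" by blast
  then have "relc P ((m' + m) + k) (App (efill F a) u) (App (efill G b) w)"
    using eL(2) by (rule relc.ra)
  moreover have "(m' + m) + k = (m' + k) + m" by simp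
  ultimately show ?case by simp
qed (auto intro: relc.intros)

lemma relE_elift: "relE P k F G \<Longrightarrow> pc P \<Longrightarrow> relE P k (elift i F) (elift i G)"
  by (induction rule: relE.induct) (auto intro!: relE.intros relc_lift simp: is_val_def)

lemma relE_evctx: "relE P k F G \<Longrightarrow> evctx F \<and> evctx G"
  by (induction rule: relE.induct) auto

lemma relc_cfill: "(a, b) \<in> P \<Longrightarrow> \<exists>k. relc P k (cfill C a) (cfill C b)"
proof (induction C)
  case Hole then show ?case by (auto intro: rp1)
next
  case (CLam C) then show ?case by (auto intro: relc.rl)
next
  case (CAppR u C) then show ?case using relc_refl by (auto intro: relc.ra)
next
  case (CAppL C u) then show ?case using relc_refl by (auto intro: relc.ra)
next
  case (CShift C) then show ?case by (auto intro: relc.rs)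
next
  case (CReset C) then show ?case by (auto intro: relc.rr)
qed

lemma relc_tilde_raw: "relc P k a b \<Longrightarrow> (a, b) \<in> tilde_raw P"
  by (induction rule: relc.induct) (auto intro: tilde_raw.intros)

lemma tilde_raw_relc: "(a, b) \<in> tilde_raw P \<Longrightarrow> \<exists>k. relc P k a b"
  by (induction rule: tilde_raw.induct[split_format(complete)]) (auto intro: relc.intros rp1)

lemma relc_mono: "relc P k a b \<Longrightarrow> P \<subseteq> Q \<Longrightarrow> relc Q k a b"
  by (induction rule: relc.induct) (auto intro: relc.intros rp1)

lemma relc_val: "relc P k (Lam x) d \<Longrightarrow> pv P \<Longrightarrow> is_val d"
  by (erule relc_LamE) (auto simp: pv_def is_val_def)



lemma pure_gen:
  assumes "pure E" "relc P k (efill E (Shift t)) y"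
  shows "(\<exists>E0 E1 p0 p1 m. (p0, p1) \<in> P \<and> efill E (Shift t) = efill E0 p0 \<and> y = efill E1 p1 \<and>
            pure E0 \<and> pure E1 \<and> relc P m (efill E0 p0) (efill E1 p0) \<and> m < k)
       \<or> (\<exists>E1 t' k1 k2. y = efill E1 (Shift t') \<and> pure E1 \<and> relE P k1 E E1 \<and> relc P k2 t t')"
  using assms
proof (induction E arbitrary: k y)
  case EHole
  from EHole(2)[simplified] show ?case
  proof (cases rule: relc_ShiftC)
    case rp
    then show ?thesis using rp relc_refl[of P "Shift t"]
      by (intro disjI1 exI[of _ EHole] exI[of _ EHole] exI[of _ "Shift t"] exI[of _ y] exI[of _ 0]) auto
  next
    case (rs a)
    then show ?thesis using rs by (intro disjI2 exI[of _ EHole]) (auto intro: relE.eh)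
  qed
next
  case (EAppR v E')
  then have vv: "is_val v" and pE: "pure E'" by auto
  from EAppR(3)[simplified] show ?case
  proof (cases rule: relc_AppC)
    case rp
    then show ?thesis using rp relc_refl[of P "App v (efill E' (Shift t))"]
      by (intro disjI1 exI[of _ EHole] exI[of _ EHole]) auto
  next
    case (ra k1 c m2 d)
    note r1 = ra(3) and r2 = ra(4)
    from vv obtain b where vb: "v = Lam b" by (auto simp: is_val_def)
    from r1[unfolded vb] show ?thesis
    proof (cases rule: relc_LamC)
      case rp
      have "relc P (0 + m2) (App v (efill E' (Shift t))) (App v d)"
        using relc_refl[of P v] r2 by (rule relc.ra)
      then have "relc P m2 (efill (EAppL EHole (efill E' (Shift t))) v) (efill (EAppL EHole d) v)" by simp
      moreover have "m2 < k" using ra rp by simp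
      moreover have "(v, c) \<in> P" using rp vb by simp
      ultimately show ?thesis using ra
        by (intro disjI1 exI[of _ "EAppL EHole (efill E' (Shift t))"] exI[of _ "EAppL EHole d"]
              exI[of _ v] exI[of _ c] exI[of _ m2]) auto
    next
      case (rl c')
      from EAppR.IH[OF pE r2] show ?thesis
      proof
        assume "\<exists>E0 E1 p0 p1 m. (p0, p1) \<in> P \<and> efill E' (Shift t) = efill E0 p0 \<and> d = efill E1 p1 \<and>
            pure E0 \<and> pure E1 \<and> relc P m (efill E0 p0) (efill E1 p0) \<and> m < m2"
        then obtain E0 E1 p0 p1 m where h: "(p0, p1) \<in> P" "efill E' (Shift t) = efill E0 p0" "d = efill E1 p1"
            "pure E0" "pure E1" "relc P m (efill E0 p0) (efill E1 p0)" "m < m2" by blast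
        have "relc P (k1 + m) (App v (efill E0 p0)) (App c (efill E1 p0))"
          using r1 h(6) by (rule relc.ra)
        then show ?thesis using h ra rl vb
          by (intro disjI1 exI[of _ "EAppR v E0"] exI[of _ "EAppR c E1"] exI[of _ p0] exI[of _ p1] exI[of _ "k1 + m"])
             (auto simp: is_val_def)
      next
        assume "\<exists>E1 t' k1 k2. d = efill E1 (Shift t') \<and> pure E1 \<and> relE P k1 E' E1 \<and> relc P k2 t t'"
        then obtain E1 t' j1 j2 where h: "d = efill E1 (Shift t')" "pure E1" "relE P j1 E' E1" "relc P j2 t t'" by blast
        have "relE P (k1 + j1) (EAppR v E') (EAppR c E1)"
          using r1 vv rl h(3) by (auto intro: relE.eR simp: is_val_def)
        then show ?thesis using h ra rl
          by (intro disjI2 exI[of _ "EAppR c E1"]) (auto simp: is_val_def)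
      qed
    qed
  qed
next
  case (EAppL E' u)
  then have pE: "pure E'" by auto
  from EAppL(3)[simplified] show ?case
  proof (cases rule: relc_AppC)
    case rp
    then show ?thesis using rp relc_refl[of P "App (efill E' (Shift t)) u"]
      by (intro disjI1 exI[of _ EHole] exI[of _ EHole]) auto
  next
    case (ra k1 c m2 d)
    note r1 = ra(3) and r2 = ra(4)
    from EAppL.IH[OF pE r1] show ?thesis
    proof
      assume "\<exists>E0 E1 p0 p1 m. (p0, p1) \<in> P \<and> efill E' (Shift t) = efill E0 p0 \<and> c = efill E1 p1 \<and>
          pure E0 \<and> pure E1 \<and> relc P m (efill E0 p0) (efill E1 p0) \<and> m < k1"
      then obtain E0 E1 p0 p1 m where h: "(p0, p1) \<in> P" "efill E' (Shift t) = efill E0 p0" "c = efill E1 p1"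
          "pure E0" "pure E1" "relc P m (efill E0 p0) (efill E1 p0)" "m < k1" by blast
      have "relc P (m + m2) (App (efill E0 p0) u) (App (efill E1 p0) d)"
        using h(6) r2 by (rule relc.ra)
      then show ?thesis using h ra
        by (intro disjI1 exI[of _ "EAppL E0 u"] exI[of _ "EAppL E1 d"] exI[of _ p0] exI[of _ p1] exI[of _ "m + m2"])
           auto
    next
      assume "\<exists>E1 t' k1' k2. c = efill E1 (Shift t') \<and> pure E1 \<and> relE P k1' E' E1 \<and> relc P k2 t t'"
      then obtain E1 t' j1 j2 where h: "c = efill E1 (Shift t')" "pure E1" "relE P j1 E' E1" "relc P j2 t t'" by blast
      have "relE P (j1 + m2) (EAppL E' u) (EAppL E1 d)"
        using h(3) r2 by (rule relE.eL)
      then show ?thesis using h ra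
        by (intro disjI2 exI[of _ "EAppL E1 d"]) auto
    qed
  qed
next
  case (EReset E')
  then show ?case by simp
qed



definition act :: "(trm \<times> trm) set \<Rightarrow> nat \<Rightarrow> trm \<Rightarrow> trm \<Rightarrow> bool" where
  "act P k a0 a1 = (\<exists>F0 F1 p0 p1 m. (p0, p1) \<in> P \<and> a0 = efill F0 p0 \<and> a1 = efill F1 p1 \<and>
      evctx F0 \<and> evctx F1 \<and> relc P m (efill F0 p0) (efill F1 p0) \<and> m < k)"

lemma act_top: "(a0, a1) \<in> P \<Longrightarrow> k = Suc 0 \<Longrightarrow> act P k a0 a1"
  unfolding act_def using relc_refl[of P a0]
  by (intro exI[of _ EHole] exI[of _ EHole] exI[of _ a0] exI[of _ a1] exI[of _ 0]) auto

lemma act_appL: "act P k1 a c \<Longrightarrow> relc P k2 b d \<Longrightarrow> act P (k1 + k2) (App a b) (App c d)"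
  unfolding act_def
proof (elim exE conjE)
  fix F0 F1 p0 p1 m
  assume h: "(p0, p1) \<in> P" "a = efill F0 p0" "c = efill F1 p1" "evctx F0" "evctx F1"
    "relc P m (efill F0 p0) (efill F1 p0)" "m < k1" "relc P k2 b d"
  have "relc P (m + k2) (efill (EAppL F0 b) p0) (efill (EAppL F1 d) p0)"
    using h by (auto intro: relc.ra)
  then show "\<exists>F0 F1 p0 p1 m. (p0, p1) \<in> P \<and> App a b = efill F0 p0 \<and> App c d = efill F1 p1 \<and>
      evctx F0 \<and> evctx F1 \<and> relc P m (efill F0 p0) (efill F1 p0) \<and> m < k1 + k2"
    using h by (intro exI[of _ "EAppL F0 b"] exI[of _ "EAppL F1 d"] exI[of _ p0] exI[of _ p1]
          exI[of _ "m + k2"]) auto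
qed

lemma act_appR: "is_val a \<Longrightarrow> is_val c \<Longrightarrow> relc P k1 a c \<Longrightarrow> act P k2 b d \<Longrightarrow> act P (k1 + k2) (App a b) (App c d)"
  unfolding act_def
proof (elim exE conjE)
  fix F0 F1 p0 p1 m
  assume h: "is_val a" "is_val c" "relc P k1 a c" "(p0, p1) \<in> P" "b = efill F0 p0" "d = efill F1 p1" "evctx F0" "evctx F1"
    "relc P m (efill F0 p0) (efill F1 p0)" "m < k2"
  have "relc P (k1 + m) (efill (EAppR a F0) p0) (efill (EAppR c F1) p0)"
    using h by (auto intro: relc.ra)
  then show "\<exists>F0 F1 p0 p1 m. (p0, p1) \<in> P \<and> App a b = efill F0 p0 \<and> App c d = efill F1 p1 \<and>
      evctx F0 \<and> evctx F1 \<and> relc P m (efill F0 p0) (efill F1 p0) \<and> m < k1 + k2"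
    using h by (intro exI[of _ "EAppR a F0"] exI[of _ "EAppR c F1"] exI[of _ p0] exI[of _ p1]
          exI[of _ "k1 + m"]) auto
qed

lemma act_reset: "act P k a c \<Longrightarrow> act P k (Reset a) (Reset c)"
  unfolding act_def
proof (elim exE conjE)
  fix F0 F1 p0 p1 m
  assume h: "(p0, p1) \<in> P" "a = efill F0 p0" "c = efill F1 p1" "evctx F0" "evctx F1"
    "relc P m (efill F0 p0) (efill F1 p0)" "m < k"
  have "relc P m (efill (EReset F0) p0) (efill (EReset F1) p0)"
    using h by (auto intro: relc.rr)
  then show "\<exists>F0 F1 p0 p1 m. (p0, p1) \<in> P \<and> Reset a = efill F0 p0 \<and> Reset c = efill F1 p1 \<and>
      evctx F0 \<and> evctx F1 \<and> relc P m (efill F0 p0) (efill F1 p0) \<and> m < k"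
    using h by (intro exI[of _ "EReset F0"] exI[of _ "EReset F1"] exI[of _ p0] exI[of _ p1]
          exI[of _ m]) auto
qed

lemma act_pure: "(p0, p1) \<in> P \<Longrightarrow> x = efill E0 p0 \<Longrightarrow> y = efill E1 p1 \<Longrightarrow> pure E0 \<Longrightarrow> pure E1 \<Longrightarrow>
   relc P m (efill E0 p0) (efill E1 p0) \<Longrightarrow> m < k \<Longrightarrow> act P k (Reset x) (Reset y)"
  unfolding act_def using pure_evctx
  by (intro exI[of _ "EReset E0"] exI[of _ "EReset E1"] exI[of _ p0] exI[of _ p1] exI[of _ m])
     (auto intro: relc.rr)

lemma step_gen: "sstep a0 a0' \<Longrightarrow> relc P k a0 a1 \<Longrightarrow> pc P \<Longrightarrow>
   (\<exists>a1' j. sstep a1 a1' \<and> relc P j a0' a1') \<or> act P k a0 a1"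
proof (induction arbitrary: k a1 rule: sstep.induct)
  case (sbeta v t)
  from sbeta(2) show ?case
  proof (cases rule: relc_AppC)
    case rp then show ?thesis by (auto intro: act_top)
  next
    case (ra k1 c k2 d)
    from ra(3) show ?thesis
    proof (cases rule: relc_LamC)
      case rp
      then have "act P k1 (Lam t) c" by (auto intro: act_top)
      then show ?thesis using ra act_appL by blast
    next
      case (rl t')
      note rlt = rl
      from sbeta(1) obtain vb where vb: "v = Lam vb" by (auto simp: is_val_def)
      from ra(4)[unfolded vb] show ?thesis
      proof (cases rule: relc_LamC)
        case rp
        then have "act P k2 v d" using vb by (auto intro: act_top)
        then show ?thesis using ra rlt act_appR[of "Lam t" "Lam t'" P k1 k2 v d] by (auto simp: is_val_def)
      next
        case (rl vb')
        have "sstep a1 (subst 0 d t')" using ra rl rlt by (auto intro: sstep.sbeta simp: is_val_def)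
        moreover obtain j where "relc P j (subst 0 v t) (subst 0 d t')"
          using relc_subst[of P k1 t t' k2 v d 0] \<open>relc P k1 t t'\<close> ra sbeta by blast
        ultimately show ?thesis by blast
      qed
    qed
  qed
next
  case (sshift E t)
  from sshift(2) show ?case
  proof (cases rule: relc_ResetC)
    case rp then show ?thesis by (auto intro: act_top)
  next
    case (rr y)
    from pure_gen[OF sshift(1) rr(2)] show ?thesis
    proof
      assume "\<exists>E0 E1 p0 p1 m. (p0, p1) \<in> P \<and> efill E (Shift t) = efill E0 p0 \<and> y = efill E1 p1 \<and>
            pure E0 \<and> pure E1 \<and> relc P m (efill E0 p0) (efill E1 p0) \<and> m < k"
      then show ?thesis using rr act_pure by metis
    next
      assume "\<exists>E1 t' k1 k2. y = efill E1 (Shift t') \<and> pure E1 \<and> relE P k1 E E1 \<and> relc P k2 t t'"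
      then obtain E1 t' k1 k2 where h: "y = efill E1 (Shift t')" "pure E1" "relE P k1 E E1" "relc P k2 t t'" by blast
      have "relE P k1 (elift 0 E) (elift 0 E1)" using relE_elift h(3) sshift(3) by blast
      then have "relc P (k1 + 0) (efill (elift 0 E) (Var 0)) (efill (elift 0 E1) (Var 0))"
        using relE_efill relc.rv by blast
      then have "relc P (k1 + 0) (Lam (Reset (efill (elift 0 E) (Var 0)))) (Lam (Reset (efill (elift 0 E1) (Var 0))))"
        by (auto intro: relc.rl relc.rr)
      then obtain j where "relc P j (subst 0 (Lam (Reset (efill (elift 0 E) (Var 0)))) t)
          (subst 0 (Lam (Reset (efill (elift 0 E1) (Var 0)))) t')"
        using relc_subst[OF h(4) sshift(3)] by blast
      then have "relc P j (Reset (subst 0 (Lam (Reset (efill (elift 0 E) (Var 0)))) t))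
          (Reset (subst 0 (Lam (Reset (efill (elift 0 E1) (Var 0)))) t'))" by (rule relc.rr)
      moreover have "sstep a1 (Reset (subst 0 (Lam (Reset (efill (elift 0 E1) (Var 0)))) t'))"
        using rr h by (auto intro: sstep.sshift)
      ultimately show ?thesis by blast
    qed
  qed
next
  case (sreset v)
  from sreset(2) show ?case
  proof (cases rule: relc_ResetC)
    case rp then show ?thesis by (auto intro: act_top)
  next
    case (rr v')
    from sreset(1) obtain vb where vb: "v = Lam vb" by (auto simp: is_val_def)
    from rr(2)[unfolded vb] show ?thesis
    proof (cases rule: relc_LamC)
      case rp
      then have "act P k v v'" using vb by (auto intro: act_top)
      then show ?thesis using rr act_reset by blast
    next
      case (rl b')
      then have "sstep a1 v'" using rr by (auto intro: sstep.sreset simp: is_val_def)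
      then show ?thesis using rr by blast
    qed
  qed
next
  case (sappL a a' b)
  from sappL(3) show ?case
  proof (cases rule: relc_AppC)
    case rp then show ?thesis by (auto intro: act_top)
  next
    case (ra k1 c k2 d)
    from sappL.IH[OF ra(3) sappL(4)] show ?thesis
    proof
      assume "\<exists>a1' j. sstep c a1' \<and> relc P j a' a1'"
      then obtain c' j where "sstep c c'" "relc P j a' c'" by blast
      then show ?thesis using ra by (blast intro: sstep.sappL relc.ra)
    next
      assume "act P k1 a c"
      then show ?thesis using ra act_appL by blast
    qed
  qed
next
  case (sappR a b b')
  from sappR(4) show ?case
  proof (cases rule: relc_AppC)
    case rp then show ?thesis by (auto intro: act_top)
  next
    case (ra k1 c k2 d)
    from sappR(1) obtain ab where ab: "a = Lam ab" by (auto simp: is_val_def)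
    from ra(3)[unfolded ab] show ?thesis
    proof (cases rule: relc_LamC)
      case rp
      then have "act P k1 a c" using ab by (auto intro: act_top)
      then show ?thesis using ra act_appL by blast
    next
      case (rl c')
      from sappR.IH[OF ra(4) sappR(5)] show ?thesis
      proof
        assume "\<exists>a1' j. sstep d a1' \<and> relc P j b' a1'"
        then obtain d' j where "sstep d d'" "relc P j b' d'" by blast
        moreover have "is_val c" using rl by (simp add: is_val_def)
        ultimately have "sstep a1 (App c d')" "relc P (k1 + j) (App a b') (App c d')"
          using ra by (auto intro: sstep.sappR relc.ra)
        then show ?thesis by blast
      next
        assume "act P k2 b d"
        then show ?thesis using ra rl sappR(1) act_appR[of a c P k1 k2 b d] by (auto simp: is_val_def)
      qed
    qed
  qed
next
  case (sreset2 a a')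
  from sreset2(3) show ?case
  proof (cases rule: relc_ResetC)
    case rp then show ?thesis by (auto intro: act_top)
  next
    case (rr c)
    from sreset2.IH[OF rr(2) sreset2(4)] show ?thesis
    proof
      assume "\<exists>a1' j. sstep c a1' \<and> relc P j a' a1'"
      then obtain c' j where "sstep c c'" "relc P j a' c'" by blast
      then show ?thesis using rr by (blast intro: sstep.sreset2 relc.rr)
    next
      assume "act P k a c"
      then show ?thesis using rr act_reset by blast
    qed
  qed
qed



lemma reset_step_inv: "sstep (Reset u) y \<Longrightarrow>
  (\<exists>E t. pure E \<and> u = efill E (Shift t) \<and> y = Reset (subst 0 (Lam (Reset (efill (elift 0 E) (Var 0)))) t))
  \<or> (is_val u \<and> y = u) \<or> (\<exists>u'. sstep u u' \<and> y = Reset u')"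
  by (erule sstep_ResetE) auto

lemma eval_step: "sstep a b \<Longrightarrow> eval_to_val b \<Longrightarrow> eval_to_val a"
  using eval_prepend[of a b] step_eq by auto

lemma main1:
  assumes ciu: "\<And>F. evctx F \<Longrightarrow> ecl 0 F \<Longrightarrow> eval_to_val (Reset (efill F t0)) \<Longrightarrow> eval_to_val (Reset (efill F t1))"
    and ct0: "closed t0" and ct1: "closed t1"
  shows "steps a0 v \<Longrightarrow> is_val v \<Longrightarrow> a0 = Reset u0 \<Longrightarrow> closed u0 \<Longrightarrow> closed u1 \<Longrightarrow>
     relc {(t0, t1)} k u0 u1 \<Longrightarrow> eval_to_val (Reset u1)"
proof (induction arbitrary: u0 u1 k rule: converse_rtranclp_induct)
  case base
  then show ?case by (simp add: is_val_def)
next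
  case (step a0 a0'')
  let ?P = "{(t0, t1)}"
  have pcP: "pc ?P" using ct0 ct1 by (simp add: pc_def)
  have st: "sstep (Reset u0) a0''" using step step_eq by simp
  have "\<forall>u1. closed u1 \<longrightarrow> relc ?P k u0 u1 \<longrightarrow> eval_to_val (Reset u1)"
  proof (induction k rule: less_induct)
    case (less k)
    have actcase: "eval_to_val (Reset u1)" if a: "act ?P k u0 u1" and cu1: "closed u1" for u1
    proof -
      from a obtain F0 F1 m where h: "u0 = efill F0 t0" "u1 = efill F1 t1" "evctx F0" "evctx F1"
        "relc ?P m (efill F0 t0) (efill F1 t0)" "m < k" unfolding act_def by blast
      have eF1: "ecl 0 F1" using cu1 h(2) by (simp add: closed_def closed_efill)
      have "closed (efill F1 t0)" using eF1 ct0 by (simp add: closed_def closed_efill)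
      then have "eval_to_val (Reset (efill F1 t0))" using less h by auto
      then show ?thesis using ciu[OF h(4) eF1] h(2) by simp
    qed
    show ?case
    proof (intro allI impI)
      fix u1 assume cu1: "closed u1" and r: "relc ?P k u0 u1"
      from reset_step_inv[OF st] show "eval_to_val (Reset u1)"
      proof (elim disjE exE conjE)
        fix E t
        assume pE: "pure E" and u0e: "u0 = efill E (Shift t)"
          and a0e: "a0'' = Reset (subst 0 (Lam (Reset (efill (elift 0 E) (Var 0)))) t)"
        from pure_gen[OF pE r[unfolded u0e]] show ?thesis
        proof
          assume "\<exists>E0 E1 p0 p1 m. (p0, p1) \<in> ?P \<and> efill E (Shift t) = efill E0 p0 \<and> u1 = efill E1 p1 \<and>
            pure E0 \<and> pure E1 \<and> relc ?P m (efill E0 p0) (efill E1 p0) \<and> m < k"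
          then have "act ?P k u0 u1" unfolding act_def u0e using pure_evctx by blast
          then show ?thesis using actcase cu1 by blast
        next
          assume "\<exists>E1 t' k1 k2. u1 = efill E1 (Shift t') \<and> pure E1 \<and> relE ?P k1 E E1 \<and> relc ?P k2 t t'"
          then obtain E1 t' k1 k2 where h: "u1 = efill E1 (Shift t')" "pure E1" "relE ?P k1 E E1" "relc ?P k2 t t'" by blast
          have "relE ?P k1 (elift 0 E) (elift 0 E1)" using relE_elift h(3) pcP by blast
          then have "relc ?P (k1 + 0) (efill (elift 0 E) (Var 0)) (efill (elift 0 E1) (Var 0))"
            using relE_efill relc.rv by blast
          then have "relc ?P (k1 + 0) (Lam (Reset (efill (elift 0 E) (Var 0)))) (Lam (Reset (efill (elift 0 E1) (Var 0))))"
            by (auto intro: relc.rl relc.rr)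
          then obtain j where rj: "relc ?P j (subst 0 (Lam (Reset (efill (elift 0 E) (Var 0)))) t)
              (subst 0 (Lam (Reset (efill (elift 0 E1) (Var 0)))) t')"
            using relc_subst[OF h(4) pcP] by blast
          have st1: "sstep (Reset u1) (Reset (subst 0 (Lam (Reset (efill (elift 0 E1) (Var 0)))) t'))"
            using h by (auto intro: sstep.sshift)
          have c0: "closed (subst 0 (Lam (Reset (efill (elift 0 E) (Var 0)))) t)"
            using sstep_closed[OF st, of 0] step.prems a0e by (simp add: closed_def)
          have c1: "closed (subst 0 (Lam (Reset (efill (elift 0 E1) (Var 0)))) t')"
            using sstep_closed[OF st1, of 0] cu1 by (simp add: closed_def)
          have "eval_to_val (Reset (subst 0 (Lam (Reset (efill (elift 0 E1) (Var 0)))) t'))"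
            using step.IH[OF step.prems(1) a0e c0 c1 rj] .
          then show ?thesis using eval_step st1 by blast
        qed
      next
        assume vu0: "is_val u0" and a0e: "a0'' = u0"
        from vu0 obtain b where u0b: "u0 = Lam b" by (auto simp: is_val_def)
        from r[unfolded u0b] show ?thesis
        proof (cases rule: relc_LamC)
          case rp
          then have "eval_to_val (Reset (efill EHole t0))"
            using eval_step[of "Reset t0" t0] val_eval[of t0] u0b sstep.sreset[of t0]
            by (auto simp: is_val_def)
          then show ?thesis using ciu[of EHole] rp by simp
        next
          case (rl b')
          then show ?thesis using eval_step[of "Reset u1" u1] val_eval[of u1] sstep.sreset[of u1]
            by (auto simp: is_val_def)
        qed
      next
        fix u0' assume st0: "sstep u0 u0'" and a0e: "a0'' = Reset u0'"
        from step_gen[OF st0 r pcP] show ?thesis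
        proof
          assume "\<exists>a1' j. sstep u1 a1' \<and> relc ?P j u0' a1'"
          then obtain u1' j where h: "sstep u1 u1'" "relc ?P j u0' u1'" by blast
          have c0: "closed u0'" using sstep_closed[OF st0, of 0] step.prems by (simp add: closed_def)
          have c1: "closed u1'" using sstep_closed[OF h(1), of 0] cu1 by (simp add: closed_def)
          have "eval_to_val (Reset u1')" using step.IH[OF step.prems(1) a0e c0 c1 h(2)] .
          then show ?thesis using eval_step sstep.sreset2[OF h(1)] by blast
        next
          assume "act ?P k u0 u1"
          then show ?thesis using actcase cu1 by blast
        qed
      qed
    qed
  qed
  then show ?case using step.prems by blast
qed



lemma pv_App: "pv P \<Longrightarrow> (App a b, y) \<notin> P"
  by (auto simp: pv_def is_val_def)
lemma pv_Reset: "pv P \<Longrightarrow> (Reset a, y) \<notin> P"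
  by (auto simp: pv_def is_val_def)
lemma pv_Shift: "pv P \<Longrightarrow> (Shift a, y) \<notin> P"
  by (auto simp: pv_def is_val_def)

lemma pure_val:
  assumes "pure E" "relc P k (efill E (Shift t)) y" "pv P"
  shows "\<exists>E1 t' k1 k2. y = efill E1 (Shift t') \<and> pure E1 \<and> relE P k1 E E1 \<and> relc P k2 t t'"
  using assms
proof (induction E arbitrary: k y)
  case EHole
  from EHole(2)[simplified] show ?case
  proof (cases rule: relc_ShiftC)
    case rp then show ?thesis using pv_Shift EHole by blast
  next
    case (rs a)
    then show ?thesis by (intro exI[of _ EHole]) (auto intro: relE.eh)
  qed
next
  case (EAppR v E')
  then have vv: "is_val v" and pE: "pure E'" by auto
  from EAppR(3)[simplified] show ?case
  proof (cases rule: relc_AppC)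
    case rp then show ?thesis using pv_App EAppR by blast
  next
    case (ra k1 c m2 d)
    have vc: "is_val c" using relc_val[of P k1 _ c] ra(3) vv EAppR(4) by (auto simp: is_val_def)
    from EAppR.IH[OF pE ra(4) EAppR(4)] obtain E1 t' j1 j2 where
      h: "d = efill E1 (Shift t')" "pure E1" "relE P j1 E' E1" "relc P j2 t t'" by blast
    have "relE P (k1 + j1) (EAppR v E') (EAppR c E1)"
      using ra(3) vv vc h(3) by (rule relE.eR)
    then show ?thesis using h ra vc by (intro exI[of _ "EAppR c E1"]) auto
  qed
next
  case (EAppL E' u)
  then have pE: "pure E'" by auto
  from EAppL(3)[simplified] show ?case
  proof (cases rule: relc_AppC)
    case rp then show ?thesis using pv_App EAppL by blast
  next
    case (ra k1 c m2 d)
    from EAppL.IH[OF pE ra(3) EAppL(4)] obtain E1 t' j1 j2 where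
      h: "c = efill E1 (Shift t')" "pure E1" "relE P j1 E' E1" "relc P j2 t t'" by blast
    have "relE P (j1 + m2) (EAppL E' u) (EAppL E1 d)"
      using h(3) ra(4) by (rule relE.eL)
    then show ?thesis using h ra by (intro exI[of _ "EAppL E1 d"]) auto
  qed
next
  case (EReset E') then show ?case by simp
qed

definition actv :: "(trm \<times> trm) set \<Rightarrow> trm \<Rightarrow> trm \<Rightarrow> trm \<Rightarrow> bool" where
  "actv P a0 a1 a0' = (\<exists>G0 G1 b0 b1 w0 w1 kG kw. (Lam b0, Lam b1) \<in> P \<and>
     a0 = efill G0 (App (Lam b0) w0) \<and> a1 = efill G1 (App (Lam b1) w1) \<and>
     a0' = efill G0 (subst 0 w0 b0) \<and> relE P kG G0 G1 \<and> relc P kw w0 w1 \<and> is_val w0 \<and> is_val w1)"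

lemma actv_appL: "actv P a c a' \<Longrightarrow> relc P k b d \<Longrightarrow> actv P (App a b) (App c d) (App a' b)"
  unfolding actv_def
  apply (elim exE conjE)
  subgoal for G0 G1 b0 b1 w0 w1 kG kw
    by (intro exI[of _ "EAppL G0 b"] exI[of _ "EAppL G1 d"] exI[of _ b0] exI[of _ b1] exI[of _ w0] exI[of _ w1]
        exI[of _ "kG + k"] exI[of _ kw]) (auto intro: relE.eL)
  done

lemma actv_appR: "is_val a \<Longrightarrow> is_val c \<Longrightarrow> relc P k a c \<Longrightarrow> actv P b d b' \<Longrightarrow> actv P (App a b) (App c d) (App a b')"
  unfolding actv_def
  apply (elim exE conjE)
  subgoal for G0 G1 b0 b1 w0 w1 kG kw
    by (intro exI[of _ "EAppR a G0"] exI[of _ "EAppR c G1"] exI[of _ b0] exI[of _ b1] exI[of _ w0] exI[of _ w1]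
        exI[of _ "k + kG"] exI[of _ kw]) (auto intro: relE.eR)
  done

lemma actv_reset: "actv P a c a' \<Longrightarrow> actv P (Reset a) (Reset c) (Reset a')"
  unfolding actv_def
  apply (elim exE conjE)
  subgoal for G0 G1 b0 b1 w0 w1 kG kw
    by (intro exI[of _ "EReset G0"] exI[of _ "EReset G1"] exI[of _ b0] exI[of _ b1] exI[of _ w0] exI[of _ w1]
        exI[of _ kG] exI[of _ kw]) (auto intro: relE.eRs)
  done

lemma step_val: "sstep a0 a0' \<Longrightarrow> relc P k a0 a1 \<Longrightarrow> pv P \<Longrightarrow>
   (\<exists>a1' j. sstep a1 a1' \<and> relc P j a0' a1') \<or> actv P a0 a1 a0'"
proof (induction arbitrary: k a1 rule: sstep.induct)
  case (sbeta v t)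
  from sbeta(2) show ?case
  proof (cases rule: relc_AppC)
    case rp then show ?thesis using pv_App sbeta by blast
  next
    case (ra k1 c k2 d)
    have vd: "is_val d" using relc_val[of P k2 _ d] ra(4) sbeta(1) sbeta(3) by (auto simp: is_val_def)
    from ra(3) show ?thesis
    proof (cases rule: relc_LamC)
      case rp
      then obtain b1 where "c = Lam b1" using sbeta(3) by (auto simp: pv_def is_val_def)
      then have "actv P (App (Lam t) v) a1 (subst 0 v t)"
        unfolding actv_def using rp ra vd sbeta(1)
        by (intro exI[of _ EHole] exI[of _ EHole]) (auto intro: relE.eh)
      then show ?thesis by blast
    next
      case (rl t')
      have "sstep a1 (subst 0 d t')" using ra rl vd by (auto intro: sstep.sbeta)
      moreover obtain j where "relc P j (subst 0 v t) (subst 0 d t')"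
        using relc_subst[of P k1 t t' k2 v d 0] rl ra pv_pc[OF sbeta(3)] by blast
      ultimately show ?thesis by blast
    qed
  qed
next
  case (sshift E t)
  from sshift(2) show ?case
  proof (cases rule: relc_ResetC)
    case rp then show ?thesis using pv_Reset sshift by blast
  next
    case (rr y)
    from pure_val[OF sshift(1) rr(2) sshift(3)]
    obtain E1 t' k1 k2 where h: "y = efill E1 (Shift t')" "pure E1" "relE P k1 E E1" "relc P k2 t t'" by blast
    have pcP: "pc P" using pv_pc sshift(3) by blast
    have "relE P k1 (elift 0 E) (elift 0 E1)" using relE_elift h(3) pcP by blast
    then have "relc P (k1 + 0) (efill (elift 0 E) (Var 0)) (efill (elift 0 E1) (Var 0))"
      using relE_efill relc.rv by blast
    then have "relc P (k1 + 0) (Lam (Reset (efill (elift 0 E) (Var 0)))) (Lam (Reset (efill (elift 0 E1) (Var 0))))"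
      by (auto intro: relc.rl relc.rr)
    then obtain j where "relc P j (subst 0 (Lam (Reset (efill (elift 0 E) (Var 0)))) t)
        (subst 0 (Lam (Reset (efill (elift 0 E1) (Var 0)))) t')"
      using relc_subst[OF h(4) pcP] by blast
    then have "relc P j (Reset (subst 0 (Lam (Reset (efill (elift 0 E) (Var 0)))) t))
        (Reset (subst 0 (Lam (Reset (efill (elift 0 E1) (Var 0)))) t'))" by (rule relc.rr)
    moreover have "sstep a1 (Reset (subst 0 (Lam (Reset (efill (elift 0 E1) (Var 0)))) t'))"
      using rr h by (auto intro: sstep.sshift)
    ultimately show ?thesis by blast
  qed
next
  case (sreset v)
  from sreset(2) show ?case
  proof (cases rule: relc_ResetC)
    case rp then show ?thesis using pv_Reset sreset by blast
  next
    case (rr v')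
    have "is_val v'" using relc_val[of P k _ v'] rr(2) sreset(1) sreset(3) by (auto simp: is_val_def)
    then have "sstep a1 v'" using rr by (auto intro: sstep.sreset)
    then show ?thesis using rr by blast
  qed
next
  case (sappL a a' b)
  from sappL(3) show ?case
  proof (cases rule: relc_AppC)
    case rp then show ?thesis using pv_App sappL by blast
  next
    case (ra k1 c k2 d)
    from sappL.IH[OF ra(3) sappL(4)] show ?thesis
    proof
      assume "\<exists>a1' j. sstep c a1' \<and> relc P j a' a1'"
      then obtain c' j where "sstep c c'" "relc P j a' c'" by blast
      then show ?thesis using ra by (blast intro: sstep.sappL relc.ra)
    next
      assume "actv P a c a'"
      then show ?thesis using ra actv_appL by blast
    qed
  qed
next
  case (sappR a b b')
  from sappR(4) show ?case
  proof (cases rule: relc_AppC)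
    case rp then show ?thesis using pv_App sappR by blast
  next
    case (ra k1 c k2 d)
    have vc: "is_val c" using relc_val[of P k1 _ c] ra(3) sappR(1) sappR(5) by (auto simp: is_val_def)
    from sappR.IH[OF ra(4) sappR(5)] show ?thesis
    proof
      assume "\<exists>a1' j. sstep d a1' \<and> relc P j b' a1'"
      then obtain d' j where h: "sstep d d'" "relc P j b' d'" by blast
      then have "sstep a1 (App c d')" "relc P (k1 + j) (App a b') (App c d')"
        using ra vc by (auto intro: sstep.sappR relc.ra)
      then show ?thesis by blast
    next
      assume "actv P b d b'"
      then show ?thesis using ra vc sappR(1) actv_appR by blast
    qed
  qed
next
  case (sreset2 a a')
  from sreset2(3) show ?case
  proof (cases rule: relc_ResetC)
    case rp then show ?thesis using pv_Reset sreset2 by blast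
  next
    case (rr c)
    from sreset2.IH[OF rr(2) sreset2(4)] show ?thesis
    proof
      assume "\<exists>a1' j. sstep c a1' \<and> relc P j a' a1'"
      then obtain c' j where "sstep c c'" "relc P j a' c'" by blast
      then show ?thesis using rr by (blast intro: sstep.sreset2 relc.rr)
    next
      assume "actv P a c a'"
      then show ?thesis using rr actv_reset by blast
    qed
  qed
qed



lemma tilde_closed: "(a, b) \<in> tilde R \<Longrightarrow> closed a \<and> closed b"
  by (simp add: tilde_def)

lemma hat_relE: "(G0, G1) \<in> hat E \<Longrightarrow> \<exists>k. relE E k G0 G1"
proof (induction rule: hat.induct)
  case hole then show ?case by (auto intro: relE.eh)
next
  case (appR F0 F1 v0 v1)
  obtain k where "relE E k F0 F1" using appR by blast
  moreover have "(v0, v1) \<in> tilde_raw E" using appR(4) by (simp add: tilde_def)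
  then obtain m where "relc E m v0 v1" using tilde_raw_relc by blast
  ultimately show ?case using appR by (auto intro: relE.eR)
next
  case (appL F0 F1 t0 t1)
  obtain k where "relE E k F0 F1" using appL by blast
  moreover have "(t0, t1) \<in> tilde_raw E" using appL(2) by (simp add: tilde_def)
  then obtain m where "relc E m t0 t1" using tilde_raw_relc by blast
  ultimately show ?case by (auto intro: relE.eL)
next
  case (rst F0 F1) then show ?case by (auto intro: relE.eRs)
qed

lemma hat_ecl: "(G0, G1) \<in> hat E \<Longrightarrow> ecl 0 G0 \<and> ecl 0 G1"
  by (induction rule: hat.induct) (auto simp: tilde_def closed_def)

lemma hat_evctx: "(G0, G1) \<in> hat E \<Longrightarrow> evctx G0 \<and> evctx G1"
  by (induction rule: hat.induct) auto

lemma relE_hat: "relE E k G0 G1 \<Longrightarrow> ecl 0 G0 \<Longrightarrow> ecl 0 G1 \<Longrightarrow> (G0, G1) \<in> hat E"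
proof (induction rule: relE.induct)
  case eh show ?case by (rule hat.hole)
next
  case (eR k v w m F G)
  then have "(v, w) \<in> tilde E" using relc_tilde_raw by (auto simp: tilde_def closed_def)
  then show ?case using eR by (auto intro: hat.appR)
next
  case (eL m F G k u w)
  then have "(u, w) \<in> tilde E" using relc_tilde_raw by (auto simp: tilde_def closed_def)
  then show ?case using eL by (auto intro: hat.appL)
next
  case (eRs m F G) then show ?case by (auto intro: hat.rst)
qed

lemma relE_mono: "relE P k G0 G1 \<Longrightarrow> P \<subseteq> Q \<Longrightarrow> relE Q k G0 G1"
  by (induction rule: relE.induct) (auto intro: relE.intros relc_mono)

lemma hat_mono: "(G0, G1) \<in> hat E \<Longrightarrow> E \<subseteq> E' \<Longrightarrow> (G0, G1) \<in> hat E'"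
  using hat_relE relE_mono relE_hat hat_ecl by metis

lemma hat_refl: "evctx G \<Longrightarrow> ecl 0 G \<Longrightarrow> (G, G) \<in> hat E"
  using relE_hat[of E _ G G]
proof -
  assume a: "evctx G" "ecl 0 G"
  have "relE E 0 G G" using a(1)
  proof (induction G)
    case EHole show ?case by (rule relE.eh)
  next
    case (EAppR v F) then show ?case using relE.eR[of E 0 v v 0 F F] relc_refl by auto
  next
    case (EAppL F u) then show ?case using relE.eL[of E 0 F F 0 u u] relc_refl by auto
  next
    case (EReset F) then show ?case by (auto intro: relE.eRs)
  qed
  then show ?thesis using relE_hat a by blast
qed

lemma hat_decomp: "(G0, G1) \<in> hat E \<Longrightarrow> (pure G0 \<and> pure G1) \<or>
  (\<exists>H0 H1 E0 E1. (H0, H1) \<in> hat E \<and> (E0, E1) \<in> hat E \<and> pure E0 \<and> pure E1 \<and>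
     G0 = ecomp H0 (EReset E0) \<and> G1 = ecomp H1 (EReset E1))"
proof (induction rule: hat.induct)
  case hole then show ?case by simp
next
  case (appR F0 F1 v0 v1)
  from appR.IH show ?case
  proof
    assume "pure F0 \<and> pure F1" then show ?thesis using appR by simp
  next
    assume "\<exists>H0 H1 E0 E1. (H0, H1) \<in> hat E \<and> (E0, E1) \<in> hat E \<and> pure E0 \<and> pure E1 \<and>
     F0 = ecomp H0 (EReset E0) \<and> F1 = ecomp H1 (EReset E1)"
    then obtain H0 H1 E0 E1 where h: "(H0, H1) \<in> hat E" "(E0, E1) \<in> hat E" "pure E0" "pure E1"
      "F0 = ecomp H0 (EReset E0)" "F1 = ecomp H1 (EReset E1)" by blast
    then show ?thesis using appR
      by (intro disjI2 exI[of _ "EAppR v0 H0"] exI[of _ "EAppR v1 H1"] exI[of _ E0] exI[of _ E1])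
         (auto intro: hat.appR)
  qed
next
  case (appL F0 F1 t0 t1)
  from appL.IH show ?case
  proof
    assume "pure F0 \<and> pure F1" then show ?thesis by simp
  next
    assume "\<exists>H0 H1 E0 E1. (H0, H1) \<in> hat E \<and> (E0, E1) \<in> hat E \<and> pure E0 \<and> pure E1 \<and>
     F0 = ecomp H0 (EReset E0) \<and> F1 = ecomp H1 (EReset E1)"
    then obtain H0 H1 E0 E1 where h: "(H0, H1) \<in> hat E" "(E0, E1) \<in> hat E" "pure E0" "pure E1"
      "F0 = ecomp H0 (EReset E0)" "F1 = ecomp H1 (EReset E1)" by blast
    then show ?thesis using appL
      by (intro disjI2 exI[of _ "EAppL H0 t0"] exI[of _ "EAppL H1 t1"] exI[of _ E0] exI[of _ E1])
         (auto intro: hat.appL)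
  qed
next
  case (rst F0 F1)
  from rst.IH show ?case
  proof
    assume "pure F0 \<and> pure F1" then show ?thesis using rst
      by (intro disjI2 exI[of _ EHole] exI[of _ EHole] exI[of _ F0] exI[of _ F1]) (auto intro: hat.hole)
  next
    assume "\<exists>H0 H1 E0 E1. (H0, H1) \<in> hat E \<and> (E0, E1) \<in> hat E \<and> pure E0 \<and> pure E1 \<and>
     F0 = ecomp H0 (EReset E0) \<and> F1 = ecomp H1 (EReset E1)"
    then obtain H0 H1 E0 E1 where h: "(H0, H1) \<in> hat E" "(E0, E1) \<in> hat E" "pure E0" "pure E1"
      "F0 = ecomp H0 (EReset E0)" "F1 = ecomp H1 (EReset E1)" by blast
    then show ?thesis
      by (intro disjI2 exI[of _ "EReset H0"] exI[of _ "EReset H1"] exI[of _ E0] exI[of _ E1])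
         (auto intro: hat.rst)
  qed
qed

lemma efill_lam: "efill G p = Lam b \<Longrightarrow> G = EHole \<and> p = Lam b"
  by (cases G) auto

lemma efill_shift_nlam: "efill E (Shift t) \<noteq> Lam b"
  by (cases E) auto

lemma prog_nval: "is_prog p \<Longrightarrow> \<not> is_val (efill G p)"
  using efill_lam by (fastforce simp: is_val_def is_prog_def)

lemmas sstep_AppC = sstep_AppE[consumes 1, case_names b l r]

lemma no_shift: "pure E \<Longrightarrow> evctx G \<Longrightarrow> is_prog p \<Longrightarrow> efill E (Shift t) \<noteq> efill G p"
proof (induction E arbitrary: G)
  case EHole then show ?case by (cases G) (auto simp: is_prog_def)
next
  case (EAppR v E')
  then show ?case
  proof (cases G)
    case (EAppL G' u)
    have "is_val v" using EAppR by simp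
    then show ?thesis using EAppL EAppR prog_nval[of p G'] by auto
  qed (auto simp: is_prog_def)
next
  case (EAppL E' u)
  then show ?case
  proof (cases G)
    case (EAppR w G')
    then show ?thesis using EAppL efill_shift_nlam by (auto simp: is_val_def)
  qed (auto simp: is_prog_def)
next
  case (EReset E') then show ?case by simp
qed

lemma ctx_prog_step: "evctx G \<Longrightarrow> is_prog p \<Longrightarrow> sstep (efill G p) a' \<Longrightarrow> \<exists>p'. sstep p p' \<and> a' = efill G p'"
proof (induction G arbitrary: a')
  case EHole then show ?case by simp
next
  case (EAppR v G')
  from EAppR(4)[simplified] show ?case
  proof (cases rule: sstep_AppC)
    case (b t) then show ?thesis using prog_nval EAppR by auto
  next
    case (l a'') then show ?thesis using EAppR val_irred by auto
  next
    case (r b') then show ?thesis using EAppR by auto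
  qed
next
  case (EAppL G' u)
  from EAppL(4)[simplified] show ?case
  proof (cases rule: sstep_AppC)
    case (b t) then show ?thesis using efill_lam[of G' p] EAppL by (auto simp: is_prog_def)
  next
    case (l a'') then show ?thesis using EAppL by auto
  next
    case (r b') then show ?thesis using prog_nval EAppL by auto
  qed
next
  case (EReset G')
  from reset_step_inv[of "efill G' p" a'] EReset(4) have
    "(\<exists>E t. pure E \<and> efill G' p = efill E (Shift t) \<and> a' = Reset (subst 0 (Lam (Reset (efill (elift 0 E) (Var 0)))) t))
     \<or> (is_val (efill G' p) \<and> a' = efill G' p) \<or> (\<exists>u'. sstep (efill G' p) u' \<and> a' = Reset u')" by simp
  then show ?case
  proof (elim disjE exE conjE)
    fix E t assume "pure E" "efill G' p = efill E (Shift t)"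
    moreover have "evctx G'" using EReset by simp
    ultimately show ?thesis using no_shift[of E G' p t] EReset(3) by simp
  next
    assume "is_val (efill G' p)" then show ?thesis using prog_nval EReset by auto
  next
    fix u' assume "sstep (efill G' p) u'" "a' = Reset u'"
    then show ?thesis using EReset by auto
  qed
qed



lemma ebD:
  assumes "env_bisim_p X"
  shows "envrel_ok X"
    "\<forall>E t0 t1. (E, t0, t1) \<in> snd X \<longrightarrow> \<not> (is_prog t0 \<and> is_prog t1) \<longrightarrow>
       (\<forall>E0 E1. pure E0 \<longrightarrow> pure E1 \<longrightarrow> (E0, E1) \<in> hat E \<longrightarrow>
          (E, Reset (efill E0 t0), Reset (efill E1 t1)) \<in> snd X)"
    "\<forall>E p0 p1. (E, p0, p1) \<in> snd X \<longrightarrow> is_prog p0 \<longrightarrow> is_prog p1 \<longrightarrow>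
       (\<forall>p0'. step p0 p0' \<longrightarrow> is_prog p0' \<longrightarrow>
          (\<exists>p1'. steps p1 p1' \<and> is_prog p1' \<and> (E, p0', p1') \<in> snd X)) \<and>
       (\<forall>v0. step p0 v0 \<longrightarrow> is_val v0 \<longrightarrow>
          (\<exists>v1. steps p1 v1 \<and> is_val v1 \<and> insert (v0, v1) E \<in> fst X)) \<and>
       (\<forall>p1'. step p1 p1' \<longrightarrow> is_prog p1' \<longrightarrow>
          (\<exists>p0'. steps p0 p0' \<and> is_prog p0' \<and> (E, p0', p1') \<in> snd X)) \<and>
       (\<forall>v1. step p1 v1 \<longrightarrow> is_val v1 \<longrightarrow>
          (\<exists>v0. steps p0 v0 \<and> is_val v0 \<and> insert (v0, v1) E \<in> fst X))"
    "\<forall>E \<in> fst X. \<forall>b0 b1 v0 v1. (Lam b0, Lam b1) \<in> E \<longrightarrow>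
       is_val v0 \<longrightarrow> is_val v1 \<longrightarrow> (v0, v1) \<in> tilde E \<longrightarrow>
       (E, subst 0 v0 b0, subst 0 v1 b1) \<in> snd X"
  using assms unfolding env_bisim_p_def
  by (rule conjunct1, rule conjunct1[OF conjunct2], rule conjunct1[OF conjunct2[OF conjunct2]],
      rule conjunct2[OF conjunct2[OF conjunct2]])

lemma pv_env_ok: "pv E = env_ok E"
  by (simp add: pv_def env_ok_def)

lemma eb_ok: assumes X: "env_bisim_p X" and e: "E \<in> fst X" shows "pv E"
proof -
  have "\<forall>E \<in> fst X. env_ok E" using ebD(1)[OF X] unfolding envrel_ok_def by (rule conjunct1)
  then show ?thesis using e pv_env_ok by blast
qed

lemma eb1: assumes X: "env_bisim_p X" shows "(E, t0, t1) \<in> snd X \<Longrightarrow> \<not> (is_prog t0 \<and> is_prog t1) \<Longrightarrow>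
  pure E0 \<Longrightarrow> pure E1 \<Longrightarrow> (E0, E1) \<in> hat E \<Longrightarrow> (E, Reset (efill E0 t0), Reset (efill E1 t1)) \<in> snd X"
  using ebD(2)[OF X, rule_format, of E t0 t1 E0 E1] by blast

lemma eb2a: assumes X: "env_bisim_p X" shows "(E, p0, p1) \<in> snd X \<Longrightarrow> is_prog p0 \<Longrightarrow> is_prog p1 \<Longrightarrow>
  step p0 p0' \<Longrightarrow> is_prog p0' \<Longrightarrow> \<exists>p1'. steps p1 p1' \<and> is_prog p1' \<and> (E, p0', p1') \<in> snd X"
proof -
  assume a: "(E, p0, p1) \<in> snd X" "is_prog p0" "is_prog p1" "step p0 p0'" "is_prog p0'"
  have "\<forall>p0'. step p0 p0' \<longrightarrow> is_prog p0' \<longrightarrow> (\<exists>p1'. steps p1 p1' \<and> is_prog p1' \<and> (E, p0', p1') \<in> snd X)"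
    using ebD(3)[OF X, rule_format, OF a(1,2,3)] by (rule conjunct1)
  then show ?thesis using a(4,5) by blast
qed

lemma eb2b: assumes X: "env_bisim_p X" shows "(E, p0, p1) \<in> snd X \<Longrightarrow> is_prog p0 \<Longrightarrow> is_prog p1 \<Longrightarrow>
  step p0 v0 \<Longrightarrow> is_val v0 \<Longrightarrow> \<exists>v1. steps p1 v1 \<and> is_val v1 \<and> insert (v0, v1) E \<in> fst X"
proof -
  assume a: "(E, p0, p1) \<in> snd X" "is_prog p0" "is_prog p1" "step p0 v0" "is_val v0"
  have "\<forall>v0. step p0 v0 \<longrightarrow> is_val v0 \<longrightarrow> (\<exists>v1. steps p1 v1 \<and> is_val v1 \<and> insert (v0, v1) E \<in> fst X)"
    using ebD(3)[OF X, rule_format, OF a(1,2,3)] by (rule conjunct1[OF conjunct2])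
  then show ?thesis using a(4,5) by blast
qed

lemma eb3: assumes X: "env_bisim_p X" shows "E \<in> fst X \<Longrightarrow> (Lam b0, Lam b1) \<in> E \<Longrightarrow> is_val v0 \<Longrightarrow> is_val v1 \<Longrightarrow>
  (v0, v1) \<in> tilde E \<Longrightarrow> (E, subst 0 v0 b0, subst 0 v1 b1) \<in> snd X"
  using ebD(4)[OF X] by blast

definition envs :: "envrel \<Rightarrow> env \<Rightarrow> bool" where
  "envs X E = (E = {} \<or> E \<in> fst X)"

definition conf :: "envrel \<Rightarrow> trm \<Rightarrow> trm \<Rightarrow> bool" where
  "conf X a0 a1 = ((\<exists>E G0 G1 p0 p1. envs X E \<and> (G0, G1) \<in> hat E \<and> (E, p0, p1) \<in> snd X \<and>
       is_prog p0 \<and> is_prog p1 \<and> a0 = efill G0 p0 \<and> a1 = efill G1 p1)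
    \<or> (\<exists>E k. envs X E \<and> relc E k a0 a1 \<and> closed a0 \<and> closed a1))"

lemma pure_app_nprog: "pure G \<Longrightarrow> is_prog (efill G (App x y)) \<Longrightarrow> False"
  by (cases G) (auto simp: is_prog_def)

lemma main2:
  assumes X: "env_bisim_p X"
  shows "steps a0 v \<Longrightarrow> is_val v \<Longrightarrow> conf X a0 a1 \<Longrightarrow> is_prog a0 \<or> is_val a0 \<Longrightarrow> eval_to_val a1"
proof (induction arbitrary: a1 rule: converse_rtranclp_induct)
  case base
  from base(2) show ?case unfolding conf_def
  proof (elim disjE exE conjE)
    fix E G0 G1 p0 p1
    assume "is_prog p0" "v = efill G0 p0"
    then show ?thesis using prog_nval base(1) by blast
  next
    fix E k assume e: "envs X E" and r: "relc E k v a1"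
    have "pv E" using e eb_ok[OF X] by (auto simp: pv_def envs_def)
    moreover obtain b where "v = Lam b" using base(1) by (auto simp: is_val_def)
    ultimately have "is_val a1" using r relc_val by blast
    then show ?thesis by (rule val_eval)
  qed
next
  case (step a0 a0')
  have st: "sstep a0 a0'" using step(1) step_eq by simp
  have pa0: "is_prog a0" using step.prems(3) st val_irred by blast
  have inv: "is_prog a0' \<or> is_val a0'" using prog_step[OF st pa0] .
  from step.prems(2) show ?case unfolding conf_def
  proof (elim disjE exE conjE)
    fix E G0 G1 p0 p1
    assume e: "envs X E" and hG: "(G0, G1) \<in> hat E" and tr: "(E, p0, p1) \<in> snd X"
      and pp0: "is_prog p0" and pp1: "is_prog p1" and a0e: "a0 = efill G0 p0" and a1e: "a1 = efill G1 p1"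
    have ev: "evctx G0" "evctx G1" using hat_evctx[OF hG] by auto
    obtain p0' where sp: "sstep p0 p0'" and a0'e: "a0' = efill G0 p0'"
      using ctx_prog_step[OF ev(1) pp0] st a0e by blast
    from prog_step[OF sp pp0] show ?thesis
    proof
      assume pp0': "is_prog p0'"
      obtain p1' where h: "steps p1 p1'" "is_prog p1'" "(E, p0', p1') \<in> snd X"
        using eb2a[OF X tr pp0 pp1 _ pp0'] sp step_eq by auto
      have "conf X a0' (efill G1 p1')" unfolding conf_def using e hG h pp0' a0'e by blast
      then have "eval_to_val (efill G1 p1')" using step.IH step.prems(1) inv by blast
      moreover have "steps a1 (efill G1 p1')" using steps_ctx[OF h(1) ev(2)] a1e by simp
      ultimately show ?thesis using eval_prepend by blast
    next
      assume vp0': "is_val p0'"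
      obtain v1 where h: "steps p1 v1" "is_val v1" "insert (p0', v1) E \<in> fst X"
        using eb2b[OF X tr pp0 pp1 _ vp0'] sp step_eq by auto
      let ?E' = "insert (p0', v1) E"
      have pvE: "pv ?E'" using eb_ok[OF X h(3)] .
      have "(G0, G1) \<in> hat ?E'" using hat_mono[OF hG] by blast
      then obtain kG where "relE ?E' kG G0 G1" using hat_relE by blast
      then have r: "relc ?E' (kG + Suc 0) (efill G0 p0') (efill G1 v1)"
        using relE_efill rp1[of p0' v1 ?E'] by blast
      have cl: "closed (efill G0 p0')" "closed (efill G1 v1)"
        using hat_ecl[OF hG] pvE by (auto simp: closed_def closed_efill pv_def)
      have "envs X ?E'" using h(3) by (simp add: envs_def)
      then have "conf X a0' (efill G1 v1)" unfolding conf_def using r cl a0'e by blast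
      then have "eval_to_val (efill G1 v1)" using step.IH step.prems(1) inv by blast
      moreover have "steps a1 (efill G1 v1)" using steps_ctx[OF h(1) ev(2)] a1e by simp
      ultimately show ?thesis using eval_prepend by blast
    qed
  next
    fix E k assume e: "envs X E" and r: "relc E k a0 a1" and c0: "closed a0" and c1: "closed a1"
    have pvE: "pv E" using e eb_ok[OF X] by (auto simp: pv_def envs_def)
    from step_val[OF st r pvE] show ?thesis
    proof
      assume "\<exists>a1' j. sstep a1 a1' \<and> relc E j a0' a1'"
      then obtain a1' j where h: "sstep a1 a1'" "relc E j a0' a1'" by blast
      have "closed a0'" "closed a1'" using sstep_closed[OF st, of 0] sstep_closed[OF h(1), of 0] c0 c1
        by (auto simp: closed_def)
      then have "conf X a0' a1'" unfolding conf_def using e h by blast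
      then have "eval_to_val a1'" using step.IH step.prems(1) inv by blast
      then show ?thesis using eval_step h(1) by blast
    next
      assume "actv E a0 a1 a0'"
      then obtain G0 G1 b0 b1 w0 w1 kG kw where h: "(Lam b0, Lam b1) \<in> E"
        "a0 = efill G0 (App (Lam b0) w0)" "a1 = efill G1 (App (Lam b1) w1)"
        "a0' = efill G0 (subst 0 w0 b0)" "relE E kG G0 G1" "relc E kw w0 w1" "is_val w0" "is_val w1"
        unfolding actv_def by blast
      have eX: "E \<in> fst X" using e h(1) by (auto simp: envs_def)
      have cG: "ecl 0 G0" "ecl 0 G1" "closed w0" "closed w1"
        using c0 c1 h(2,3) by (auto simp: closed_def closed_efill)
      have "(w0, w1) \<in> tilde E" using relc_tilde_raw[OF h(6)] cG by (simp add: tilde_def)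
      then have tr: "(E, subst 0 w0 b0, subst 0 w1 b1) \<in> snd X"
        using eb3[OF X eX h(1) h(7) h(8)] by blast
      have hG: "(G0, G1) \<in> hat E" using relE_hat[OF h(5) cG(1,2)] .
      have ev1: "evctx G1" using hat_evctx[OF hG] by simp
      have st1: "sstep a1 (efill G1 (subst 0 w1 b1))"
        using sstep_ctx[OF ev1 sstep.sbeta[OF h(8), of b1]] h(3) by simp
      from hat_decomp[OF hG] show ?thesis
      proof
        assume "pure G0 \<and> pure G1"
        then show ?thesis using pure_app_nprog pa0 h(2) by blast
      next
        assume "\<exists>H0 H1 E0 E1. (H0, H1) \<in> hat E \<and> (E0, E1) \<in> hat E \<and> pure E0 \<and> pure E1 \<and>
          G0 = ecomp H0 (EReset E0) \<and> G1 = ecomp H1 (EReset E1)"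
        then obtain H0 H1 E0 E1 where d: "(H0, H1) \<in> hat E" "(E0, E1) \<in> hat E" "pure E0" "pure E1"
          "G0 = ecomp H0 (EReset E0)" "G1 = ecomp H1 (EReset E1)" by blast
        have "conf X a0' (efill G1 (subst 0 w1 b1))"
        proof (cases "is_prog (subst 0 w0 b0) \<and> is_prog (subst 0 w1 b1)")
          case True
          then show ?thesis unfolding conf_def using e hG tr h(4) by blast
        next
          case False
          have tr2: "(E, Reset (efill E0 (subst 0 w0 b0)), Reset (efill E1 (subst 0 w1 b1))) \<in> snd X"
            using eb1[OF X tr False d(3,4,2)] .
          have q: "a0' = efill H0 (Reset (efill E0 (subst 0 w0 b0)))"
            "efill G1 (subst 0 w1 b1) = efill H1 (Reset (efill E1 (subst 0 w1 b1)))"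
            using h(4) d(5,6) by (auto simp: efill_ecomp)
          show ?thesis unfolding conf_def q
            by (intro disjI1 exI[of _ E] exI[of _ H0] exI[of _ H1] exI[of _ "Reset (efill E0 (subst 0 w0 b0))"]
                exI[of _ "Reset (efill E1 (subst 0 w1 b1))"]) (use e d(1) tr2 in \<open>auto simp: is_prog_def\<close>)
        qed
        then have "eval_to_val (efill G1 (subst 0 w1 b1))" using step.IH step.prems(1) inv by blast
        then show ?thesis using eval_step st1 by blast
      qed
    qed
  qed
qed

lemma ciu_bisim:
  assumes X: "env_bisim_p X" and tr: "({}, t0, t1) \<in> snd X"
    and F: "evctx F" "ecl 0 F" and ev: "eval_to_val (Reset (efill F t0))"
  shows "eval_to_val (Reset (efill F t1))"
proof -
  have hG: "(EReset F, EReset F) \<in> hat {}" using hat_refl F by simp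
  have c: "conf X (Reset (efill F t0)) (Reset (efill F t1))"
  proof (cases "is_prog t0 \<and> is_prog t1")
    case True
    then show ?thesis unfolding conf_def using hG tr
      by (intro disjI1 exI[of _ "{}"] exI[of _ "EReset F"] exI[of _ "EReset F"]) (auto simp: envs_def)
  next
    case False
    have "\<exists>H0 H1 E0 E1. (H0, H1) \<in> hat {} \<and> (E0, E1) \<in> hat {} \<and> pure E0 \<and> pure E1 \<and>
      EReset F = ecomp H0 (EReset E0) \<and> EReset F = ecomp H1 (EReset E1)"
      using hat_decomp[OF hG] by simp
    then obtain H0 H1 E0 E1 where d: "(H0, H1) \<in> hat {}" "(E0, E1) \<in> hat {}" "pure E0" "pure E1"
      "EReset F = ecomp H0 (EReset E0)" "EReset F = ecomp H1 (EReset E1)" by blast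
    have tr2: "({}, Reset (efill E0 t0), Reset (efill E1 t1)) \<in> snd X"
      using eb1[OF X tr False d(3,4,2)] .
    have e: "Reset (efill F t0) = efill H0 (Reset (efill E0 t0))" "Reset (efill F t1) = efill H1 (Reset (efill E1 t1))"
      using d(5,6) efill_ecomp[of H0 "EReset E0"] efill_ecomp[of H1 "EReset E1"] by (metis efill.simps(4))+
    show ?thesis unfolding conf_def e
      by (intro disjI1 exI[of _ "{}"] exI[of _ H0] exI[of _ H1] exI[of _ "Reset (efill E0 t0)"]
          exI[of _ "Reset (efill E1 t1)"]) (use d(1) tr2 in \<open>auto simp: is_prog_def envs_def\<close>)
  qed
  from ev obtain v where "steps (Reset (efill F t0)) v" "is_val v" unfolding eval_to_val_def by blast
  then show ?thesis using main2[OF X] c by (auto simp: is_prog_def)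
qed



definition swapX :: "envrel \<Rightarrow> envrel" where
  "swapX X = (converse ` fst X, (\<lambda>(E, a, b). (converse E, b, a)) ` snd X)"

lemma tilde_raw_conv: "(a, b) \<in> tilde_raw (R\<inverse>) \<Longrightarrow> (b, a) \<in> tilde_raw R"
  by (induction rule: tilde_raw.induct[split_format(complete)]) (auto intro: tilde_raw.intros)

lemma tilde_conv: "(a, b) \<in> tilde (R\<inverse>) \<Longrightarrow> (b, a) \<in> tilde R"
  using tilde_raw_conv by (auto simp: tilde_def)

lemma hat_conv: "(F0, F1) \<in> hat (R\<inverse>) \<Longrightarrow> (F1, F0) \<in> hat R"
  by (induction rule: hat.induct) (auto intro: hat.intros tilde_conv)

lemma swap_img: "(E, a, b) \<in> snd X \<Longrightarrow> (E\<inverse>, b, a) \<in> snd (swapX X)"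
  unfolding swapX_def by (force intro: image_eqI[where x = "(E, a, b)"])

lemma swap_mem: "(E, a, b) \<in> snd (swapX X) \<Longrightarrow> \<exists>E'. E = E'\<inverse> \<and> (E', b, a) \<in> snd X"
  unfolding swapX_def by auto

lemma swap_bisim:
  assumes X: "env_bisim_p X"
  shows "env_bisim_p (swapX X)"
proof -
  have ok: "envrel_ok (swapX X)"
    using ebD(1)[OF X] unfolding envrel_ok_def swapX_def env_ok_def by auto
  have c1: "\<forall>E t0 t1. (E, t0, t1) \<in> snd (swapX X) \<longrightarrow> \<not> (is_prog t0 \<and> is_prog t1) \<longrightarrow>
       (\<forall>E0 E1. pure E0 \<longrightarrow> pure E1 \<longrightarrow> (E0, E1) \<in> hat E \<longrightarrow>
          (E, Reset (efill E0 t0), Reset (efill E1 t1)) \<in> snd (swapX X))"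
  proof (intro allI impI)
    fix E t0 t1 E0 E1
    assume a: "(E, t0, t1) \<in> snd (swapX X)" "\<not> (is_prog t0 \<and> is_prog t1)" "pure E0" "pure E1" "(E0, E1) \<in> hat E"
    from swap_mem[OF a(1)] obtain E' where e: "E = E'\<inverse>" "(E', t1, t0) \<in> snd X" by blast
    have "(E1, E0) \<in> hat E'" using hat_conv a(5) e(1) by blast
    then have "(E', Reset (efill E1 t1), Reset (efill E0 t0)) \<in> snd X"
      using eb1[OF X e(2) _ a(4) a(3)] a(2) by blast
    then show "(E, Reset (efill E0 t0), Reset (efill E1 t1)) \<in> snd (swapX X)"
      using swap_img e(1) by blast
  qed
  have c2: "\<forall>E p0 p1. (E, p0, p1) \<in> snd (swapX X) \<longrightarrow> is_prog p0 \<longrightarrow> is_prog p1 \<longrightarrow>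
       (\<forall>p0'. step p0 p0' \<longrightarrow> is_prog p0' \<longrightarrow>
          (\<exists>p1'. steps p1 p1' \<and> is_prog p1' \<and> (E, p0', p1') \<in> snd (swapX X))) \<and>
       (\<forall>v0. step p0 v0 \<longrightarrow> is_val v0 \<longrightarrow>
          (\<exists>v1. steps p1 v1 \<and> is_val v1 \<and> insert (v0, v1) E \<in> fst (swapX X))) \<and>
       (\<forall>p1'. step p1 p1' \<longrightarrow> is_prog p1' \<longrightarrow>
          (\<exists>p0'. steps p0 p0' \<and> is_prog p0' \<and> (E, p0', p1') \<in> snd (swapX X))) \<and>
       (\<forall>v1. step p1 v1 \<longrightarrow> is_val v1 \<longrightarrow>
          (\<exists>v0. steps p0 v0 \<and> is_val v0 \<and> insert (v0, v1) E \<in> fst (swapX X)))"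
  proof (intro allI impI)
    fix E p0 p1
    assume a: "(E, p0, p1) \<in> snd (swapX X)" "is_prog p0" "is_prog p1"
    from swap_mem[OF a(1)] obtain E' where e: "E = E'\<inverse>" "(E', p1, p0) \<in> snd X" by blast
    have C: "(\<forall>p0'. step p1 p0' \<longrightarrow> is_prog p0' \<longrightarrow>
          (\<exists>p1'. steps p0 p1' \<and> is_prog p1' \<and> (E', p0', p1') \<in> snd X)) \<and>
       (\<forall>v0. step p1 v0 \<longrightarrow> is_val v0 \<longrightarrow>
          (\<exists>v1. steps p0 v1 \<and> is_val v1 \<and> insert (v0, v1) E' \<in> fst X)) \<and>
       (\<forall>p1'. step p0 p1' \<longrightarrow> is_prog p1' \<longrightarrow>
          (\<exists>p0'. steps p1 p0' \<and> is_prog p0' \<and> (E', p0', p1') \<in> snd X)) \<and>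
       (\<forall>v1. step p0 v1 \<longrightarrow> is_val v1 \<longrightarrow>
          (\<exists>v0. steps p1 v0 \<and> is_val v0 \<and> insert (v0, v1) E' \<in> fst X))"
      using ebD(3)[OF X, rule_format, OF e(2) a(3) a(2)] .
    have ins: "insert (v0, v1) E \<in> fst (swapX X)" if "insert (v1, v0) E' \<in> fst X" for v0 v1
    proof -
      have "insert (v0, v1) E = (insert (v1, v0) E')\<inverse>" using e(1) by auto
      then show ?thesis using that unfolding swapX_def by auto
    qed
    show "(\<forall>p0'. step p0 p0' \<longrightarrow> is_prog p0' \<longrightarrow>
          (\<exists>p1'. steps p1 p1' \<and> is_prog p1' \<and> (E, p0', p1') \<in> snd (swapX X))) \<and>
       (\<forall>v0. step p0 v0 \<longrightarrow> is_val v0 \<longrightarrow>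
          (\<exists>v1. steps p1 v1 \<and> is_val v1 \<and> insert (v0, v1) E \<in> fst (swapX X))) \<and>
       (\<forall>p1'. step p1 p1' \<longrightarrow> is_prog p1' \<longrightarrow>
          (\<exists>p0'. steps p0 p0' \<and> is_prog p0' \<and> (E, p0', p1') \<in> snd (swapX X))) \<and>
       (\<forall>v1. step p1 v1 \<longrightarrow> is_val v1 \<longrightarrow>
          (\<exists>v0. steps p0 v0 \<and> is_val v0 \<and> insert (v0, v1) E \<in> fst (swapX X)))"
    proof (intro conjI allI impI)
      fix p0' assume "step p0 p0'" "is_prog p0'"
      then obtain q where "steps p1 q" "is_prog q" "(E', q, p0') \<in> snd X" using C by blast
      then show "\<exists>p1'. steps p1 p1' \<and> is_prog p1' \<and> (E, p0', p1') \<in> snd (swapX X)"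
        using swap_img e(1) by blast
    next
      fix v0 assume "step p0 v0" "is_val v0"
      then obtain q where "steps p1 q" "is_val q" "insert (q, v0) E' \<in> fst X" using C by blast
      then show "\<exists>v1. steps p1 v1 \<and> is_val v1 \<and> insert (v0, v1) E \<in> fst (swapX X)"
        using ins by blast
    next
      fix p1' assume "step p1 p1'" "is_prog p1'"
      then obtain q where "steps p0 q" "is_prog q" "(E', p1', q) \<in> snd X" using C by blast
      then show "\<exists>p0'. steps p0 p0' \<and> is_prog p0' \<and> (E, p0', p1') \<in> snd (swapX X)"
        using swap_img e(1) by blast
    next
      fix v1 assume "step p1 v1" "is_val v1"
      then obtain q where "steps p0 q" "is_val q" "insert (v1, q) E' \<in> fst X" using C by blast
      then show "\<exists>v0. steps p0 v0 \<and> is_val v0 \<and> insert (v0, v1) E \<in> fst (swapX X)"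
        using ins by blast
    qed
  qed
  have c3: "\<forall>E \<in> fst (swapX X). \<forall>b0 b1 v0 v1. (Lam b0, Lam b1) \<in> E \<longrightarrow>
       is_val v0 \<longrightarrow> is_val v1 \<longrightarrow> (v0, v1) \<in> tilde E \<longrightarrow>
       (E, subst 0 v0 b0, subst 0 v1 b1) \<in> snd (swapX X)"
  proof (intro ballI allI impI)
    fix E b0 b1 v0 v1
    assume a: "E \<in> fst (swapX X)" "(Lam b0, Lam b1) \<in> E" "is_val v0" "is_val v1" "(v0, v1) \<in> tilde E"
    from a(1) obtain E' where e: "E = E'\<inverse>" "E' \<in> fst X" unfolding swapX_def by auto
    have "(v1, v0) \<in> tilde E'" using tilde_conv a(5) e(1) by blast
    then have "(E', subst 0 v1 b1, subst 0 v0 b0) \<in> snd X"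
      using eb3[OF X e(2) _ a(4) a(3)] a(2) e(1) by blast
    then show "(E, subst 0 v0 b0, subst 0 v1 b1) \<in> snd (swapX X)" using swap_img e(1) by blast
  qed
  show ?thesis unfolding env_bisim_p_def using ok c1 c2 c3 by blast
qed

theorem corollary2:
  assumes "closed t0" and "closed t1"
    and "env_bisimilar_p {} t0 t1"
  shows "ctx_equiv_p t0 t1"
proof -
  from assms(3) obtain X where X: "env_bisim_p X" and tr: "({}, t0, t1) \<in> snd X"
    unfolding env_bisimilar_p_def by blast
  have X': "env_bisim_p (swapX X)" using swap_bisim[OF X] .
  have tr': "({}, t1, t0) \<in> snd (swapX X)" using swap_img[OF tr] by simp
  have ciu01: "\<And>F. evctx F \<Longrightarrow> ecl 0 F \<Longrightarrow> eval_to_val (Reset (efill F t0)) \<Longrightarrow> eval_to_val (Reset (efill F t1))"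
    using ciu_bisim[OF X tr] by blast
  have ciu10: "\<And>F. evctx F \<Longrightarrow> ecl 0 F \<Longrightarrow> eval_to_val (Reset (efill F t1)) \<Longrightarrow> eval_to_val (Reset (efill F t0))"
    using ciu_bisim[OF X' tr'] by blast
  show ?thesis unfolding ctx_equiv_p_def
  proof (intro allI impI iffI)
    fix C assume c0: "closed (Reset (cfill C t0))" and c1: "closed (Reset (cfill C t1))"
    {
      assume "eval_to_val (Reset (cfill C t0))"
      then obtain v where "steps (Reset (cfill C t0)) v" "is_val v" unfolding eval_to_val_def by blast
      moreover obtain k where "relc {(t0, t1)} k (cfill C t0) (cfill C t1)" using relc_cfill by blast
      ultimately show "eval_to_val (Reset (cfill C t1))"
        using main1[OF ciu01 assms(1,2)] c0 c1 by (auto simp: closed_def)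
    }
    {
      assume "eval_to_val (Reset (cfill C t1))"
      then obtain v where "steps (Reset (cfill C t1)) v" "is_val v" unfolding eval_to_val_def by blast
      moreover obtain k where "relc {(t1, t0)} k (cfill C t1) (cfill C t0)" using relc_cfill by blast
      ultimately show "eval_to_val (Reset (cfill C t0))"
        using main1[OF ciu10 assms(2,1)] c0 c1 by (auto simp: closed_def)
    }
  qed
qed

end
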